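(* Let $(\mathbb{X},\|\cdot\|)$ be an infinite-dimensional (real or complex) Banach space and let $\mathcal{B}=(\mathbf{e}_n)_{n=1}^\infty$ be a semi-normalized basis of $\mathbb{X}$. Then $\mathbb{X}$ admits an equivalent norm $|||\cdot|||$ such that $\mathcal{B}$ is $1$-quasi-greedy in $(\mathbb{X},|||\cdot|||)$ if and only if $\mathcal{B}$ is unconditional.
   Context: A basis is a Schauder basis; semi-normalized means $0<\inf_n\|\mathbf{e}_n\|\le\sup_n\|\mathbf{e}_n\|<\infty$; $(\mathbf{e}_n^* )$ are the biorthogonal functionals. The basis is unconditional if for every $x$ the series $\sum_n\mathbf{e}_n^*(x)\mathbf{e}_n$ converges to $x$ in every order. For a norm $|||\cdot|||$ on $\mathbb{X}$, $x\in\mathbb{X}$ and $N\in\mathbb{N}$, a greedy set $\Lambda_N(x)$ is any set of $N$ indices with $\min\{|\mathbf{e}_j^*(x)|: j\in\Lambda_N(x)\}\ge\max\{|\mathbf{e}_j^*(x)|: j\notin\Lambda_N(x)\}$, and $\mathcal{G}_N(x)=\sum_{j\in\Lambda_N(x)}\mathbf{e}_j^*(x)\mathbf{e}_j$. The basis is $1$-quasi-greedy in $(\mathbb{X},|||\cdot|||)$ if $|||\mathcal{G}_N(x)|||\le|||x|||$ and $|||x-\mathcal{G}_N(x)|||\le|||x|||$ for all $x$, $N$ and all choices of greedy sets. *)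

theory Defs
  imports "HOL-Analysis.Analysis"
begin

text \<open>For real spaces take sc = scaleR; for complex spaces sc is complex scalar multiplication.\<close>
definition normed_scalar_action :: "('k::real_normed_field \<Rightarrow> 'a::real_normed_vector \<Rightarrow> 'a) \<Rightarrow> bool" where
  "normed_scalar_action sc \<longleftrightarrow>
     (\<forall>a b x. sc (a + b) x = sc a x + sc b x) \<and>
     (\<forall>a x y. sc a (x + y) = sc a x + sc a y) \<and>
     (\<forall>a b x. sc (a * b) x = sc a (sc b x)) \<and>
     (\<forall>x. sc 1 x = x) \<and>
     (\<forall>r x. sc (of_real r) x = scaleR r x) \<and>
     (\<forall>a x. norm (sc a x) = norm a * norm x)"

definition finite_dimensional_over :: "('k::real_normed_field \<Rightarrow> 'a::real_normed_vector \<Rightarrow> 'a) \<Rightarrow> bool" where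
  "finite_dimensional_over sc \<longleftrightarrow>
     (\<exists>F::'a set. finite F \<and> (\<forall>x. \<exists>c::'a \<Rightarrow> 'k. x = (\<Sum>v\<in>F. sc (c v) v)))"

definition schauder_basis :: "('k::real_normed_field \<Rightarrow> 'a::real_normed_vector \<Rightarrow> 'a) \<Rightarrow> (nat \<Rightarrow> 'a) \<Rightarrow> bool" where
  "schauder_basis sc e \<longleftrightarrow>
     (\<forall>x. \<exists>!c::nat \<Rightarrow> 'k. (\<lambda>n. \<Sum>k<n. sc (c k) (e k)) \<longlonglongrightarrow> x)"

definition coord :: "('k::real_normed_field \<Rightarrow> 'a::real_normed_vector \<Rightarrow> 'a) \<Rightarrow> (nat \<Rightarrow> 'a) \<Rightarrow> nat \<Rightarrow> 'a \<Rightarrow> 'k" where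
  "coord sc e n x = (THE c::nat \<Rightarrow> 'k. (\<lambda>m. \<Sum>k<m. sc (c k) (e k)) \<longlonglongrightarrow> x) n"

definition semi_normalized :: "(nat \<Rightarrow> 'a::real_normed_vector) \<Rightarrow> bool" where
  "semi_normalized e \<longleftrightarrow> (\<exists>a b. 0 < a \<and> (\<forall>n. a \<le> norm (e n) \<and> norm (e n) \<le> b))"

definition unconditional_basis :: "('k::real_normed_field \<Rightarrow> 'a::real_normed_vector \<Rightarrow> 'a) \<Rightarrow> (nat \<Rightarrow> 'a) \<Rightarrow> bool" where
  "unconditional_basis sc e \<longleftrightarrow> schauder_basis sc e \<and>
     (\<forall>x. \<forall>\<pi>::nat \<Rightarrow> nat. bij \<pi> \<longrightarrow>
        (\<lambda>n. \<Sum>k<n. sc (coord sc e (\<pi> k) x) (e (\<pi> k))) \<longlonglongrightarrow> x)"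

definition is_norm_over :: "('k::real_normed_field \<Rightarrow> 'a::real_normed_vector \<Rightarrow> 'a) \<Rightarrow> ('a \<Rightarrow> real) \<Rightarrow> bool" where
  "is_norm_over sc N \<longleftrightarrow>
     (\<forall>x. N x = 0 \<longleftrightarrow> x = 0) \<and>
     (\<forall>a x. N (sc a x) = norm a * N x) \<and>
     (\<forall>x y. N (x + y) \<le> N x + N y)"

definition equivalent_norm :: "('k::real_normed_field \<Rightarrow> 'a::real_normed_vector \<Rightarrow> 'a) \<Rightarrow> ('a \<Rightarrow> real) \<Rightarrow> bool" where
  "equivalent_norm sc N \<longleftrightarrow> is_norm_over sc N \<and>
     (\<exists>c C. 0 < c \<and> 0 < C \<and> (\<forall>x. c * norm x \<le> N x \<and> N x \<le> C * norm x))"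

definition greedy_set :: "('k::real_normed_field \<Rightarrow> 'a::real_normed_vector \<Rightarrow> 'a) \<Rightarrow> (nat \<Rightarrow> 'a) \<Rightarrow> 'a \<Rightarrow> nat \<Rightarrow> nat set \<Rightarrow> bool" where
  "greedy_set sc e x m A \<longleftrightarrow> finite A \<and> card A = m \<and>
     (\<forall>i\<in>A. \<forall>j. j \<notin> A \<longrightarrow> norm (coord sc e j x) \<le> norm (coord sc e i x))"

definition greedy_sum :: "('k::real_normed_field \<Rightarrow> 'a::real_normed_vector \<Rightarrow> 'a) \<Rightarrow> (nat \<Rightarrow> 'a) \<Rightarrow> 'a \<Rightarrow> nat set \<Rightarrow> 'a" where
  "greedy_sum sc e x A = (\<Sum>j\<in>A. sc (coord sc e j x) (e j))"

definition one_quasi_greedy :: "('k::real_normed_field \<Rightarrow> 'a::real_normed_vector \<Rightarrow> 'a) \<Rightarrow> (nat \<Rightarrow> 'a) \<Rightarrow> ('a \<Rightarrow> real) \<Rightarrow> bool" where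
  "one_quasi_greedy sc e N \<longleftrightarrow>
     (\<forall>x m A. greedy_set sc e x m A \<longrightarrow>
        N (greedy_sum sc e x A) \<le> N x \<and> N (x - greedy_sum sc e x A) \<le> N x)"

end

theory Submission
  imports Defs "HOL-Analysis.Analysis"
begin

datatype 'a kc = KC (kre: 'a) (kim: 'a)

lemma kc_eq_iff: "x = y \<longleftrightarrow> kre x = kre y \<and> kim x = kim y"
  by (cases x; cases y) auto

instantiation kc :: (comm_ring_1) comm_ring_1
begin
definition "0 = KC 0 0"
definition "1 = KC 1 0"
definition "x + y = KC (kre x + kre y) (kim x + kim y)"
definition "x - y = KC (kre x - kre y) (kim x - kim y)"
definition "- x = KC (- kre x) (- kim x)"
definition "x * y = KC (kre x * kre y - kim x * kim y) (kre x * kim y + kim x * kre y)"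
instance
  by intro_classes
    (auto simp: kc_eq_iff zero_kc_def one_kc_def plus_kc_def minus_kc_def uminus_kc_def
      times_kc_def algebra_simps)
end

lemma kc_simps [simp]:
  "kre 0 = 0" "kim 0 = 0" "kre 1 = 1" "kim 1 = 0"
  "kre (x + y) = kre x + kre y" "kim (x + y) = kim x + kim y"
  "kre (x - y) = kre x - kre y" "kim (x - y) = kim x - kim y"
  "kre (- x) = - kre x" "kim (- x) = - kim x"
  "kre (x * y) = kre x * kre y - kim x * kim y" "kim (x * y) = kre x * kim y + kim x * kre y"
  by (simp_all add: zero_kc_def one_kc_def plus_kc_def minus_kc_def uminus_kc_def times_kc_def)

definition cj :: "'a::comm_ring_1 kc \<Rightarrow> 'a kc" where "cj x = KC (kre x) (- kim x)"

lemma cj_simps [simp]: "kre (cj x) = kre x" "kim (cj x) = - kim x"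
  by (simp_all add: cj_def)

lemma cj_mult: "cj (x * y) = cj x * cj y" and cj_diff: "cj (x - y) = cj x - cj y"
  by (simp_all add: kc_eq_iff algebra_simps)

lemma cj_power: "cj (x ^ n) = cj x ^ n"
  by (induction n) (simp_all add: cj_mult kc_eq_iff)

lemma cj_prod_list: "cj (prod_list (map f L)) = prod_list (map (\<lambda>r. cj (f r)) L)"
  by (induction L) (simp_all add: cj_mult kc_eq_iff)

definition ek :: "'a::comm_ring_1 \<Rightarrow> 'a kc" where "ek u = KC u 0"

lemma ek_simps [simp]: "kre (ek u) = u" "kim (ek u) = 0"
  by (simp_all add: ek_def)

lemma ek_prod_list: "ek (prod_list (map f L)) = prod_list (map (\<lambda>r. ek (f r)) L)"
  by (induction L) (simp_all add: kc_eq_iff)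

definition eC :: "complex \<Rightarrow> 'a::{comm_ring_1,real_algebra_1} kc" where
  "eC z = KC (of_real (Re z)) (of_real (Im z))"

lemma eC_simps [simp]: "kre (eC z) = of_real (Re z)" "kim (eC z) = of_real (Im z)"
  by (simp_all add: eC_def)

lemma eC_mult: "eC (z * w) = (eC z * eC w :: 'a::{comm_ring_1,real_algebra_1} kc)"
  by (simp add: kc_eq_iff algebra_simps of_real_mult[symmetric] del: of_real_mult)

lemma eC_power: "eC (z ^ n) = (eC z ^ n :: 'a::{comm_ring_1,real_algebra_1} kc)"
  by (induction n) (simp_all add: eC_mult kc_eq_iff)

lemma eC_neg1: "eC (-1) = (-1 :: 'a::{comm_ring_1,real_algebra_1} kc)"
  by (simp add: kc_eq_iff)

fun rl :: "(nat \<Rightarrow> 'r::comm_ring_1) \<Rightarrow> nat \<Rightarrow> 'r \<Rightarrow> 'r list" where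
  "rl c 0 w = [w]"
| "rl c (Suc j) w = rl c j w @ rl c j (w * c j)"

lemma rl_prod:
  assumes "\<And>j. c j ^ (2 ^ j) = - 1"
  shows "prod_list (map (\<lambda>r. x - r) (rl c j w)) = x ^ (2 ^ j) - w ^ (2 ^ j)"
proof (induction j arbitrary: w)
  case 0
  then show ?case by simp
next
  case (Suc j)
  have "prod_list (map (\<lambda>r. x - r) (rl c (Suc j) w))
      = (x ^ (2 ^ j) - w ^ (2 ^ j)) * (x ^ (2 ^ j) - (w * c j) ^ (2 ^ j))"
    using Suc by simp
  also have "(w * c j) ^ (2 ^ j) = - (w ^ (2 ^ j))"
    using assms[of j] by (simp add: power_mult_distrib)
  also have "(x ^ (2 ^ j) - w ^ (2 ^ j)) * (x ^ (2 ^ j) - - (w ^ (2 ^ j)))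
      = (x ^ (2 ^ j)) ^ 2 - (w ^ (2 ^ j)) ^ 2"
    by (simp add: algebra_simps power2_eq_square)
  also have "\<dots> = x ^ (2 ^ Suc j) - w ^ (2 ^ Suc j)"
    by (simp add: power_mult[symmetric] mult.commute)
  finally show ?case .
qed

lemma rl_map:
  assumes "\<And>u v. f (u * v) = f u * f v"
  shows "map f (rl c j w) = rl (\<lambda>i. f (c i)) j (f w)"
  by (induction j arbitrary: w) (simp_all add: assms)

lemma rl_length: "length (rl c j w) = 2 ^ j"
  by (induction j arbitrary: w) simp_all

lemma rl_hd: "\<exists>L. rl c j w = w # L"
proof (induction j arbitrary: w)
  case (Suc j)
  then obtain L where "rl c j w = w # L" by blast
  then show ?case by simp
qed simp

primrec cc :: "nat \<Rightarrow> complex" where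
  "cc 0 = -1"
| "cc (Suc j) = csqrt (cc j)"

lemma cc_pow: "cc j ^ (2 ^ j) = -1"
proof (induction j)
  case (Suc j)
  have "cc (Suc j) ^ (2 ^ Suc j) = (csqrt (cc j) ^ 2) ^ (2 ^ j)"
    by (simp add: power_mult)
  then show ?case using Suc by (simp add: power2_csqrt)
qed simp

lemma norm_prod_list: "norm (prod_list (map f L)) = prod_list (map (\<lambda>r. norm (f r :: 'a::real_normed_field)) L)"
  by (induction L) (simp_all add: norm_mult)

lemma ek_power: "ek (u ^ n) = (ek u ^ n :: 'a::comm_ring_1 kc)"
  by (induction n) (simp_all add: kc_eq_iff)

lemma prod_list_map_mult: "prod_list (map (\<lambda>r. f r * g r) L) = prod_list (map f L) * (prod_list (map g L) :: 'a::comm_monoid_mult)"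
  by (induction L) (simp_all add: ac_simps)

lemma prod_list_ge_pow:
  assumes "\<And>r. r \<in> set L \<Longrightarrow> m \<le> f r" "0 \<le> (m::real)"
  shows "m ^ length L \<le> prod_list (map f L)"
  using assms
proof (induction L)
  case (Cons x L)
  have fx: "m \<le> f x" using Cons.prems by simp
  have "m ^ length L \<le> prod_list (map f L)" using Cons by simp
  then have "m * m ^ length L \<le> f x * prod_list (map f L)"
    using fx Cons.prems(2) by (intro mult_mono) auto
  then show ?case by simp
qed simp

lemma n1_power: "norm (kre (x ^ n)) + norm (kim (x ^ n)) \<le> (norm (kre x) + norm (kim x :: 'a::real_normed_field)) ^ n"
proof (induction n)
  case 0
  then show ?case by simp
next
  case (Suc n)
  define p where "p = kre x" define q where "q = kim x"
  define u where "u = kre (x ^ n)" define v where "v = kim (x ^ n)"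
  have "norm (kre (x ^ Suc n)) + norm (kim (x ^ Suc n)) = norm (p * u - q * v) + norm (p * v + q * u)"
    by (simp add: p_def q_def u_def v_def)
  also have "\<dots> \<le> (norm p * norm u + norm q * norm v) + (norm p * norm v + norm q * norm u)"
    by (intro add_mono) (auto intro!: order_trans[OF norm_triangle_ineq4] order_trans[OF norm_triangle_ineq] simp: norm_mult)
  also have "\<dots> = (norm p + norm q) * (norm u + norm v)" by (simp add: algebra_simps)
  also have "\<dots> \<le> (norm p + norm q) * (norm p + norm q) ^ n"
    using Suc by (intro mult_left_mono) (auto simp: p_def q_def u_def v_def)
  finally show ?case by (simp add: p_def q_def)
qed

context
  fixes a :: "'k::real_normed_field"
begin

definition Q :: "complex \<Rightarrow> 'k" where
  "Q z = (a - of_real (Re z))^2 + of_real ((Im z)^2)"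

lemma ek_Q: "ek (Q z) = (ek a - eC z) * cj (ek a - eC z)"
  by (simp add: kc_eq_iff Q_def power2_eq_square algebra_simps)

lemma eC_add: "eC (z + w) = (eC z + eC w :: 'k kc)"
  by (simp add: kc_eq_iff)

lemma prod_identity:
  fixes z0 w :: complex
  defines "A \<equiv> ek a - eC z0"
  shows "prod_list (map (\<lambda>r. Q (z0 + r)) (rl cc j w))
     = (kre (A ^ (2^j)) - of_real (Re (w ^ (2^j))))^2 + (kim (A ^ (2^j)) - of_real (Im (w ^ (2^j))))^2"
proof -
  define X where "X = A ^ (2^j) - eC (w ^ (2^j))"
  have 1: "prod_list (map (\<lambda>r. A - r) (rl (\<lambda>i. eC (cc i)) j (eC w))) = A ^ (2^j) - eC w ^ (2^j)"
    by (rule rl_prod) (simp add: eC_power[symmetric] cc_pow eC_neg1)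
  have 2: "map eC (rl cc j w) = rl (\<lambda>i. eC (cc i)) j (eC w :: 'k kc)"
    by (rule rl_map) (rule eC_mult)
  have 3: "prod_list (map (\<lambda>r. A - eC r) (rl cc j w)) = X"
    using 1 unfolding X_def eC_power 2[symmetric] by (simp add: comp_def)
  have "ek (prod_list (map (\<lambda>r. Q (z0 + r)) (rl cc j w)))
      = prod_list (map (\<lambda>r. (A - eC r) * cj (A - eC r)) (rl cc j w))"
    unfolding ek_prod_list ek_Q A_def eC_add by (simp add: algebra_simps)
  also have "\<dots> = X * cj X"
    unfolding prod_list_map_mult 3 cj_prod_list[symmetric] ..
  finally have "ek (prod_list (map (\<lambda>r. Q (z0 + r)) (rl cc j w))) = X * cj X" .
  then have "prod_list (map (\<lambda>r. Q (z0 + r)) (rl cc j w)) = kre (X * cj X)"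
    by (metis ek_simps(1))
  then show ?thesis
    by (simp add: X_def power2_eq_square algebra_simps)
qed

lemma Q0_pow:
  fixes z0 :: complex
  defines "A \<equiv> ek a - eC z0"
  shows "Q z0 ^ n = kre (A ^ n)^2 + kim (A ^ n)^2"
proof -
  have "ek (Q z0 ^ n) = (A * cj A) ^ n" by (simp add: ek_power ek_Q A_def)
  also have "\<dots> = A ^ n * cj (A ^ n)" by (simp add: power_mult_distrib cj_power)
  finally show ?thesis by (metis ek_simps(1) kc_simps(11) cj_simps power2_eq_square diff_minus_eq_add mult_minus_right)
qed

end

lemma lim_aux:
  fixes x m r1 r2 :: real
  assumes "\<And>j. x \<le> m + 2 * m * r1 ^ (2^j) + m * r2 ^ (2^j)"
    and "0 \<le> r1" "r1 < 1" "0 \<le> r2" "r2 < 1" "0 \<le> m"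
  shows "x \<le> m"
proof (rule ccontr)
  assume "\<not> x \<le> m"
  define d where "d = (x - m) / (3 * m + 1)"
  have d: "0 < d" using \<open>\<not> x \<le> m\<close> assms by (simp add: d_def)
  obtain j1 where j1: "r1 ^ j1 < d" using real_arch_pow_inv[OF d \<open>r1 < 1\<close>] by blast
  obtain j2 where j2: "r2 ^ j2 < d" using real_arch_pow_inv[OF d \<open>r2 < 1\<close>] by blast
  define j where "j = j1 + j2"
  have "j < 2 ^ j" by (rule less_exp)
  have jj1: "j1 \<le> 2^j" "j2 \<le> 2^j" using \<open>j < 2 ^ j\<close> unfolding j_def by linarith+
  have "r1 ^ (2^j) \<le> r1 ^ j1"
    using assms by (intro power_decreasing[OF jj1(1)]) auto
  then have a1: "r1 ^ (2^j) < d" using j1 by linarith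
  have "r2 ^ (2^j) \<le> r2 ^ j2"
    using assms by (intro power_decreasing[OF jj1(2)]) auto
  then have a2: "r2 ^ (2^j) < d" using j2 by linarith
  have b1: "2 * m * r1 ^ (2^j) \<le> 2 * m * d" using a1 \<open>0 \<le> m\<close> by (intro mult_left_mono) auto
  have b2: "m * r2 ^ (2^j) \<le> m * d" using a2 \<open>0 \<le> m\<close> by (intro mult_left_mono) auto
  have x1: "x \<le> m + 2 * m * d + m * d"
    using assms(1)[of j] b1 b2 by linarith
  have dm: "d * (3 * m + 1) = x - m" using \<open>0 \<le> m\<close> by (simp add: d_def)
  have d3: "d * (3 * m + 1) = 3 * m * d + d" by (simp add: algebra_simps)
  show False using x1 dm d3 d by linarith
qed

context
  fixes a :: "'k::real_normed_field"
begin

lemma key_ineq: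
  fixes z0 w :: complex and m :: real
  assumes minm: "\<And>z. m \<le> norm (Q a z)" and m0: "0 < m" and z0: "norm (Q a z0) = m"
  defines "B \<equiv> norm a + \<bar>Re z0\<bar> + \<bar>Im z0\<bar>"
  shows "norm (Q a (z0 + w)) * m ^ (2^j - 1) \<le> m ^ (2^j) + 2 * (cmod w * B) ^ (2^j) + (cmod w ^ 2) ^ (2^j)"
proof -
  define N :: nat where "N = 2^j"
  define A where "A = ek a - eC z0"
  define U where "U = kre (A ^ N)"
  define V where "V = kim (A ^ N)"
  define \<alpha> :: 'k where "\<alpha> = of_real (Re (w ^ N))"
  define \<beta> :: 'k where "\<beta> = of_real (Im (w ^ N))"
  obtain L where L: "rl cc j w = w # L" using rl_hd by blast
  have lenL: "length L = N - 1" using rl_length[of cc j w] unfolding L N_def by simp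
  have "m ^ (N - 1) \<le> prod_list (map (\<lambda>r. norm (Q a (z0 + r))) L)"
    using prod_list_ge_pow[of L m "\<lambda>r. norm (Q a (z0 + r))"] minm m0 lenL by auto
  then have "norm (Q a (z0 + w)) * m ^ (N - 1) \<le> norm (Q a (z0 + w)) * prod_list (map (\<lambda>r. norm (Q a (z0 + r))) L)"
    by (intro mult_left_mono) auto
  also have "\<dots> = norm (prod_list (map (\<lambda>r. Q a (z0 + r)) (rl cc j w)))"
    unfolding L norm_prod_list by simp
  also have "\<dots> = norm ((U - \<alpha>)^2 + (V - \<beta>)^2)"
    unfolding prod_identity U_def V_def \<alpha>_def \<beta>_def A_def N_def ..
  finally have h1: "norm (Q a (z0 + w)) * m ^ (N - 1) \<le> norm ((U - \<alpha>)^2 + (V - \<beta>)^2)" .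
  have eqx: "(U - \<alpha>)^2 + (V - \<beta>)^2 = (U^2 + V^2) - 2 * (\<alpha> * U) - 2 * (\<beta> * V) + (\<alpha>^2 + \<beta>^2)"
    by (simp add: power2_eq_square algebra_simps)
  have tri: "\<And>p q r s :: 'k. norm (p - q - r + s) \<le> norm p + norm q + norm r + norm s"
  proof -
    fix p q r s :: 'k
    have "norm (p - q - r + s) \<le> norm (p - q - r) + norm s" by (rule norm_triangle_ineq)
    moreover have "norm (p - q - r) \<le> norm (p - q) + norm r" by (rule norm_triangle_ineq4)
    moreover have "norm (p - q) \<le> norm p + norm q" by (rule norm_triangle_ineq4)
    ultimately show "norm (p - q - r + s) \<le> norm p + norm q + norm r + norm s" by linarith
  qed
  have h2: "norm ((U - \<alpha>)^2 + (V - \<beta>)^2) \<le> norm (U^2 + V^2) + 2 * (norm \<alpha> * norm U) + 2 * (norm \<beta> * norm V) + norm (\<alpha>^2 + \<beta>^2)"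
    unfolding eqx using tri[of "U^2 + V^2" "2 * (\<alpha> * U)" "2 * (\<beta> * V)" "\<alpha>^2 + \<beta>^2"]
    by (simp add: norm_mult)
  have "U^2 + V^2 = Q a z0 ^ N"
    using Q0_pow[of a z0 N] by (simp add: U_def V_def A_def)
  then have h3: "norm (U^2 + V^2) = m ^ N" using z0 by (simp add: norm_power)
  have "\<alpha>^2 + \<beta>^2 = of_real ((Re (w ^ N))^2 + (Im (w ^ N))^2)"
    by (simp add: \<alpha>_def \<beta>_def)
  also have "(Re (w ^ N))^2 + (Im (w ^ N))^2 = (cmod (w ^ N))^2" by (simp add: cmod_power2)
  also have "(cmod (w ^ N))^2 = (cmod w ^ 2) ^ N"
    by (simp add: norm_power power_mult[symmetric] mult.commute)
  finally have h4': "\<alpha>^2 + \<beta>^2 = (of_real ((cmod w ^ 2) ^ N) :: 'k)" .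
  have h4: "norm (\<alpha>^2 + \<beta>^2) = (cmod w ^ 2) ^ N" unfolding h4' norm_of_real by simp
  have h5a: "norm \<alpha> \<le> cmod w ^ N" unfolding \<alpha>_def norm_of_real
    using abs_Re_le_cmod[of "w ^ N"] by (simp add: norm_power)
  have h5b: "norm \<beta> \<le> cmod w ^ N" unfolding \<beta>_def norm_of_real
    using abs_Im_le_cmod[of "w ^ N"] by (simp add: norm_power)
  have h6: "norm U + norm V \<le> B ^ N"
  proof -
    have "norm U + norm V \<le> (norm (kre A) + norm (kim A)) ^ N"
      unfolding U_def V_def by (rule n1_power)
    also have "\<dots> \<le> B ^ N"
    proof (intro power_mono)
      have "norm (kre A) \<le> norm a + \<bar>Re z0\<bar>"
        unfolding A_def using norm_triangle_ineq4[of a "of_real (Re z0)"] by simp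
      moreover have "norm (kim A) = \<bar>Im z0\<bar>" by (simp add: A_def)
      ultimately show "norm (kre A) + norm (kim A) \<le> B" by (simp add: B_def)
    qed auto
    finally show ?thesis .
  qed
  have p1: "norm \<alpha> * norm U \<le> cmod w ^ N * norm U" by (rule mult_right_mono[OF h5a]) simp
  have p2: "norm \<beta> * norm V \<le> cmod w ^ N * norm V" by (rule mult_right_mono[OF h5b]) simp
  have p3: "cmod w ^ N * (norm U + norm V) \<le> cmod w ^ N * B ^ N" by (rule mult_left_mono[OF h6]) simp
  have p4: "cmod w ^ N * (norm U + norm V) = cmod w ^ N * norm U + cmod w ^ N * norm V"
    by (simp add: distrib_left)
  have "norm (Q a (z0 + w)) * m ^ (N - 1) \<le> m ^ N + 2 * (cmod w ^ N * B ^ N) + (cmod w ^ 2) ^ N"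
    using h1 h2 h3 h4 p1 p2 p3 p4 by linarith
  then show ?thesis by (simp add: N_def power_mult_distrib)
qed

lemma key2:
  fixes z0 w :: complex and m :: real
  assumes minm: "\<And>z. m \<le> norm (Q a z)" and m0: "0 < m" and z0: "norm (Q a z0) = m"
  defines "B \<equiv> norm a + \<bar>Re z0\<bar> + \<bar>Im z0\<bar>"
  shows "norm (Q a (z0 + w)) \<le> m + 2 * m * ((cmod w * B) / m) ^ (2^j) + m * ((cmod w ^ 2) / m) ^ (2^j)"
proof -
  define N :: nat where "N = 2^j"
  have N: "N = Suc (N - 1)" by (simp add: N_def)
  have pos: "0 < m ^ (N - 1)" using m0 by simp
  have "norm (Q a (z0 + w)) * m ^ (N - 1) \<le> m ^ N + 2 * (cmod w * B) ^ N + (cmod w ^ 2) ^ N"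
    using key_ineq[OF minm m0 z0, of w j] by (simp add: B_def N_def)
  also have "\<dots> = (m + 2 * m * ((cmod w * B) / m) ^ N + m * ((cmod w ^ 2) / m) ^ N) * m ^ (N - 1)"
  proof -
    have e1: "m ^ N = m * m ^ (N - 1)" by (subst N) simp
    have e2: "\<And>p. p ^ N = m * (p / m) ^ N * m ^ (N - 1)"
      using m0 by (simp add: power_divide e1)
    show ?thesis by (subst e2, subst e2, subst e1) (simp add: algebra_simps)
  qed
  finally show ?thesis using pos N_def by simp
qed

lemma Q_cont: "continuous_on UNIV (\<lambda>z. norm (Q a z))"
  unfolding Q_def by (intro continuous_intros)

lemma Q_coercive:
  assumes "cmod z \<ge> 3 * norm a + 1"
  shows "norm (Q a 0) < norm (Q a z)"
proof -
  define s where "s = Re z"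
  define r where "r = cmod z"
  have e: "s^2 + (Im z)^2 = r^2" by (simp add: s_def r_def cmod_power2)
  have "Q a z = (a * a - 2 * of_real s * a) + of_real (s^2 + (Im z)^2)"
    by (simp add: Q_def s_def power2_eq_square algebra_simps)
  then have "Q a z = (a * a - 2 * of_real s * a) + of_real (r^2)" by (simp only: e)
  moreover have na: "norm (a * a - 2 * of_real s * a) \<le> norm a * norm a + 2 * (\<bar>s\<bar> * norm a)"
    using norm_triangle_ineq4[of "a*a" "2 * of_real s * a"]
    by (simp add: norm_mult)
  moreover have "r^2 \<le> norm ((a * a - 2 * of_real s * a) + of_real (r^2) :: 'k) + norm (a * a - 2 * of_real s * a)"
  proof -
    have "r^2 = norm (((a * a - 2 * of_real s * a) + of_real (r^2)) - (a * a - 2 * of_real s * a) :: 'k)" by (simp add: norm_power)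
    also have "\<dots> \<le> norm ((a * a - 2 * of_real s * a) + of_real (r^2) :: 'k) + norm (a * a - 2 * of_real s * a)"
      by (rule norm_triangle_ineq4)
    finally show ?thesis .
  qed
  ultimately have L: "r * r - norm a * norm a - 2 * (\<bar>s\<bar> * norm a) \<le> norm (Q a z)"
    by (simp add: power2_eq_square)
  have s: "\<bar>s\<bar> \<le> r" using abs_Re_le_cmod by (simp add: s_def r_def)
  have r: "r \<ge> 3 * norm a + 1" using assms by (simp add: r_def)
  have q1: "\<bar>s\<bar> * norm a \<le> r * norm a" using s by (rule mult_right_mono) simp
  have r0: "0 \<le> r" using r norm_ge_zero[of a] by linarith
  have "r * (3 * norm a + 1) \<le> r * r" using r r0 by (intro mult_left_mono) auto
  then have q2: "3 * (r * norm a) + r \<le> r * r" by (simp add: algebra_simps)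
  have "(3 * norm a + 1) * norm a \<le> r * norm a" using r by (rule mult_right_mono) simp
  then have q3: "3 * (norm a * norm a) + norm a \<le> r * norm a" by (simp add: algebra_simps)
  have q0: "norm (Q a 0) = norm a * norm a" by (simp add: Q_def norm_power power2_eq_square norm_mult)
  have aa: "0 \<le> norm a * norm a" by simp
  show ?thesis using L q1 q2 q3 q0 r norm_ge_zero[of a] aa by linarith
qed

lemma Q_root: "\<exists>z. Q a z = 0"
proof (rule ccontr)
  assume nz: "\<not> (\<exists>z. Q a z = 0)"
  define \<phi> where "\<phi> = (\<lambda>z. norm (Q a z))"
  define R where "R = 3 * norm a + 1"
  have cont: "continuous_on UNIV \<phi>" unfolding \<phi>_def by (rule Q_cont)
  have out: "\<And>z. z \<notin> cball 0 R \<Longrightarrow> \<phi> 0 < \<phi> z"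
    unfolding \<phi>_def by (rule Q_coercive) (simp add: R_def)
  have R0: "0 < R" unfolding R_def using norm_ge_zero[of a] by linarith
  have cb: "compact (cball (0::complex) R)" "cball (0::complex) R \<noteq> {}"
    using R0 by auto
  have cc: "continuous_on (cball 0 R) \<phi>" by (rule continuous_on_subset[OF cont]) simp
  obtain z1 where z1: "z1 \<in> cball 0 R" "\<And>z. z \<in> cball 0 R \<Longrightarrow> \<phi> z1 \<le> \<phi> z"
    using continuous_attains_inf[OF cb cc] by blast
  define m where "m = \<phi> z1"
  have zR: "0 \<in> cball 0 R" using R0 by simp
  have minm: "\<And>z. m \<le> \<phi> z"
  proof -
    fix z
    show "m \<le> \<phi> z"
    proof (cases "z \<in> cball 0 R")
      case True then show ?thesis using z1 by (simp add: m_def)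
    next
      case False then show ?thesis using out[OF False] z1(2)[OF zR] by (simp add: m_def)
    qed
  qed
  have m0: "0 < m" using nz unfolding m_def \<phi>_def by auto
  define S where "S = {z. \<phi> z = m}"
  have "closed S" unfolding S_def
    by (rule closed_Collect_eq[OF cont]) (rule continuous_on_const)
  moreover have "S \<subseteq> cball 0 R"
  proof
    fix z assume "z \<in> S"
    show "z \<in> cball 0 R"
    proof (rule ccontr)
      assume "z \<notin> cball 0 R"
      then have "\<phi> 0 < \<phi> z" by (rule out)
      moreover have "m \<le> \<phi> 0" by (rule minm)
      ultimately show False using \<open>z \<in> S\<close> by (simp add: S_def)
    qed
  qed
  ultimately have "compact S" by (metis bounded_cball bounded_subset compact_eq_bounded_closed)
  moreover have "S \<noteq> {}" using S_def m_def by auto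
  ultimately obtain z0 where z0: "z0 \<in> S" "\<And>z. z \<in> S \<Longrightarrow> cmod z \<le> cmod z0"
    using continuous_attains_sup[of S cmod] continuous_on_norm_id by blast
  define B where "B = norm a + \<bar>Re z0\<bar> + \<bar>Im z0\<bar>"
  have B0: "0 \<le> B" by (simp add: B_def)
  define \<delta> where "\<delta> = min (m / (B + 1)) (sqrt m / 2)"
  have d0: "0 < \<delta>" using m0 B0 by (simp add: \<delta>_def)
  have dB: "\<delta> * B < m"
  proof -
    have "\<delta> * B \<le> m / (B + 1) * B" using B0 by (intro mult_right_mono) (auto simp: \<delta>_def min.cobounded1)
    also have "\<dots> < m" using m0 B0 by (simp add: field_simps)
    finally show ?thesis .
  qed
  have dd: "\<delta>^2 < m"
  proof -
    have "\<delta> \<le> sqrt m / 2" unfolding \<delta>_def by (rule min.cobounded2)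
    then have "\<delta>^2 \<le> (sqrt m / 2)^2" using d0 by (intro power_mono) auto
    also have "\<dots> = m / 4" using m0 by (simp add: power_divide)
    finally show ?thesis using m0 by simp
  qed
  define w where "w = (if z0 = 0 then complex_of_real \<delta> else complex_of_real \<delta> * (z0 / complex_of_real (cmod z0)))"
  have cw: "cmod w = \<delta>" using d0 by (simp add: w_def norm_mult norm_divide)
  have cz: "cmod (z0 + w) = cmod z0 + \<delta>"
  proof (cases "z0 = 0")
    case True then show ?thesis using d0 by (simp add: w_def)
  next
    case False
    have e: "w = complex_of_real (\<delta> / cmod z0) * z0"
      using False by (simp add: w_def field_simps)
    have "z0 + w = complex_of_real (1 + \<delta> / cmod z0) * z0"
      unfolding e by (simp add: algebra_simps)
    moreover have nn: "0 \<le> 1 + \<delta> / cmod z0" using d0 by (intro add_nonneg_nonneg divide_nonneg_nonneg) auto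
    moreover have "cmod (complex_of_real (1 + \<delta> / cmod z0) * z0) = (1 + \<delta> / cmod z0) * cmod z0"
      unfolding norm_mult norm_of_real using nn by (simp only: abs_of_nonneg)
    ultimately have "cmod (z0 + w) = (1 + \<delta> / cmod z0) * cmod z0" by simp
    also have "\<dots> = cmod z0 + \<delta>" using False by (simp add: distrib_right)
    finally show ?thesis .
  qed
  have z0m: "norm (Q a z0) = m" using z0 by (simp add: S_def \<phi>_def)
  have "\<And>j. norm (Q a (z0 + w)) \<le> m + 2 * m * ((cmod w * B) / m) ^ (2^j) + m * ((cmod w ^ 2) / m) ^ (2^j)"
    using key2[of m z0 w] minm m0 z0m unfolding \<phi>_def B_def by blast
  then have "norm (Q a (z0 + w)) \<le> m"
    by (rule lim_aux) (use m0 cw dB dd d0 B0 in \<open>auto simp: field_simps\<close>)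
  then have "z0 + w \<in> S" using minm unfolding S_def \<phi>_def by (simp add: antisym)
  then have "cmod (z0 + w) \<le> cmod z0" by (rule z0)
  then show False using cz d0 by simp
qed

end

lemma rnf_decomp_or_real:
  fixes b :: "'k::real_normed_field"
  shows "\<exists>x y. (b - of_real x)^2 = - ((of_real y)^2)"
proof -
  obtain z where "Q b z = 0" using Q_root by blast
  then have "(b - of_real (Re z))^2 = - ((of_real (Im z))^2)"
    unfolding Q_def by (simp add: eq_neg_iff_add_eq_0)
  then show ?thesis by blast
qed

lemma rnf_complete:
  fixes f :: "nat \<Rightarrow> 'k::real_normed_field"
  assumes "Cauchy f"
  shows "convergent f"
proof (cases "\<forall>b::'k. \<exists>r. b = of_real r")
  case True
  define g where "g n = (SOME r. f n = of_real r)" for n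
  have fg: "f n = of_real (g n)" for n
    using True someI_ex[of "\<lambda>r. f n = of_real r"] unfolding g_def by blast
  have gd: "dist (g m) (g n) = dist (f m) (f n)" for m n
  proof -
    have "dist (f m) (f n) = norm (of_real (g m - g n) :: 'k)" by (simp add: fg dist_norm)
    also have "\<dots> = dist (g m) (g n)" by (simp only: norm_of_real dist_real_def)
    finally show ?thesis by simp
  qed
  have "Cauchy g"
    using assms unfolding Cauchy_def gd .
  then obtain L where "g \<longlonglongrightarrow> L" using Cauchy_convergent_iff convergent_def by blast
  then have "(\<lambda>n. of_real (g n) :: 'k) \<longlonglongrightarrow> of_real L" by (rule tendsto_of_real)
  then show ?thesis unfolding fg[symmetric] convergent_def by blast
next
  case False
  then obtain b :: 'k where b: "\<And>r. b \<noteq> of_real r" by blast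
  obtain s t where st: "(b - of_real s)^2 = - ((of_real t)^2)" using rnf_decomp_or_real by blast
  have t0: "t \<noteq> 0"
  proof
    assume "t = 0"
    then have "b - of_real s = 0" using st by simp
    then show False using b[of s] by simp
  qed
  define i where "i = (b - of_real s) / of_real t"
  have ii: "i * i = -1"
    using st t0 unfolding i_def by (simp add: power2_eq_square field_simps)
  have ni: "norm i = 1"
  proof -
    have "norm (i * i) = 1" using ii by simp
    then have "norm i ^ 2 = 1" by (simp add: norm_mult power2_eq_square)
    then have "norm i = 1 \<or> norm i = -1" by (simp add: power2_eq_1_iff)
    then show ?thesis using norm_ge_zero[of i] by linarith
  qed
  have dec: "\<exists>x y. c = of_real x + of_real y * i" for c :: 'k
  proof -
    obtain x y where xy: "(c - of_real x)^2 = - ((of_real y)^2)" using rnf_decomp_or_real by blast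
    have "(c - of_real x - of_real y * i) * (c - of_real x + of_real y * i) = (c - of_real x)^2 - (of_real y)^2 * (i * i)"
      by (simp add: power2_eq_square algebra_simps)
    also have "\<dots> = 0" using xy ii by simp
    finally have "c - of_real x - of_real y * i = 0 \<or> c - of_real x + of_real y * i = 0" by simp
    then show ?thesis
    proof
      assume "c - of_real x - of_real y * i = 0"
      then have "c = of_real x + of_real y * i" by (simp add: algebra_simps)
      then show ?thesis by blast
    next
      assume "c - of_real x + of_real y * i = 0"
      then have "c = of_real x + of_real (- y) * i" by (simp add: algebra_simps)
      then show ?thesis by blast
    qed
  qed
  have lb: "\<bar>x\<bar> + \<bar>y\<bar> \<le> 2 * norm (of_real x + of_real y * i :: 'k)" for x y :: real
  proof (cases "\<bar>x\<bar> + \<bar>y\<bar> = 0")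
    case True then show ?thesis using norm_ge_zero[of "of_real x + of_real y * i :: 'k"] by linarith
  next
    case False
    then have pos: "0 < \<bar>x\<bar> + \<bar>y\<bar>" by simp
    have "(of_real x + of_real y * i) * (of_real x - of_real y * i) = (of_real x * of_real x - of_real y * of_real y * (i * i) :: 'k)"
      by (simp add: algebra_simps)
    also have "\<dots> = of_real (x^2 + y^2)" using ii by (simp add: power2_eq_square)
    finally have pr: "(of_real x + of_real y * i) * (of_real x - of_real y * i) = (of_real (x^2 + y^2) :: 'k)" .
    then have "norm (of_real (x^2 + y^2) :: 'k) = norm (of_real x + of_real y * i :: 'k) * norm (of_real x - of_real y * i :: 'k)"
      by (subst pr[symmetric]) (rule norm_mult)
    moreover have "norm (of_real (x^2 + y^2) :: 'k) = x^2 + y^2"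
      unfolding norm_of_real by (rule abs_of_nonneg) simp
    ultimately have "x^2 + y^2 = norm (of_real x + of_real y * i :: 'k) * norm (of_real x - of_real y * i :: 'k)"
      by simp
    also have "norm (of_real x - of_real y * i :: 'k) \<le> \<bar>x\<bar> + \<bar>y\<bar>"
      using norm_triangle_ineq4[of "of_real x :: 'k" "of_real y * i"] ni by (simp add: norm_mult)
    then have "norm (of_real x + of_real y * i :: 'k) * norm (of_real x - of_real y * i :: 'k)
        \<le> norm (of_real x + of_real y * i :: 'k) * (\<bar>x\<bar> + \<bar>y\<bar>)"
      by (intro mult_left_mono) auto
    finally have A: "x^2 + y^2 \<le> norm (of_real x + of_real y * i :: 'k) * (\<bar>x\<bar> + \<bar>y\<bar>)" .
    have B0: "(\<bar>x\<bar> + \<bar>y\<bar>) * (\<bar>x\<bar> + \<bar>y\<bar>) = 2 * (x^2 + y^2) - (\<bar>x\<bar> - \<bar>y\<bar>) * (\<bar>x\<bar> - \<bar>y\<bar>)"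
      by (simp add: power2_eq_square algebra_simps abs_mult_self_eq)
    have "0 \<le> (\<bar>x\<bar> - \<bar>y\<bar>) * (\<bar>x\<bar> - \<bar>y\<bar>)" by simp
    then have B: "(\<bar>x\<bar> + \<bar>y\<bar>) * (\<bar>x\<bar> + \<bar>y\<bar>) \<le> 2 * (x^2 + y^2)" using B0 by linarith
    have "(\<bar>x\<bar> + \<bar>y\<bar>) * (\<bar>x\<bar> + \<bar>y\<bar>) \<le> (2 * norm (of_real x + of_real y * i :: 'k)) * (\<bar>x\<bar> + \<bar>y\<bar>)"
      using A B by (simp add: algebra_simps)
    then show ?thesis using pos by (simp add: mult_le_cancel_right)
  qed
  define p where "p n = fst (SOME pq. f n = of_real (fst pq) + of_real (snd pq) * i)" for n
  define q where "q n = snd (SOME pq. f n = of_real (fst pq) + of_real (snd pq) * i)" for n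
  have fpq: "f n = of_real (p n) + of_real (q n) * i" for n
  proof -
    have "\<exists>pq. f n = of_real (fst pq) + of_real (snd pq) * i" using dec[of "f n"] by auto
    then show ?thesis unfolding p_def q_def by (rule someI_ex)
  qed
  have diff: "\<bar>p m - p n\<bar> + \<bar>q m - q n\<bar> \<le> 2 * dist (f m) (f n)" for m n
  proof -
    have "f m - f n = of_real (p m - p n) + of_real (q m - q n) * i"
      unfolding fpq by (simp add: algebra_simps)
    then show ?thesis using lb[of "p m - p n" "q m - q n"] by (simp add: dist_norm)
  qed
  have "Cauchy p"
  proof (rule metric_CauchyI)
    fix e :: real assume "0 < e"
    then obtain M where "\<forall>m\<ge>M. \<forall>n\<ge>M. dist (f m) (f n) < e / 2"
      using assms unfolding Cauchy_def by (meson half_gt_zero)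
    then have M: "\<And>m n. M \<le> m \<Longrightarrow> M \<le> n \<Longrightarrow> dist (f m) (f n) < e / 2" by blast
    show "\<exists>M. \<forall>m\<ge>M. \<forall>n\<ge>M. dist (p m) (p n) < e"
    proof (intro exI allI impI)
      fix m n assume "M \<le> m" "M \<le> n"
      then have "dist (f m) (f n) < e / 2" by (rule M)
      moreover have "\<bar>p m - p n\<bar> + \<bar>q m - q n\<bar> \<le> 2 * dist (f m) (f n)" by (rule diff)
      moreover have "0 \<le> \<bar>q m - q n\<bar>" by simp
      ultimately show "dist (p m) (p n) < e" unfolding dist_real_def by linarith
    qed
  qed
  moreover have "Cauchy q"
  proof (rule metric_CauchyI)
    fix e :: real assume "0 < e"
    then obtain M where "\<forall>m\<ge>M. \<forall>n\<ge>M. dist (f m) (f n) < e / 2"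
      using assms unfolding Cauchy_def by (meson half_gt_zero)
    then have M: "\<And>m n. M \<le> m \<Longrightarrow> M \<le> n \<Longrightarrow> dist (f m) (f n) < e / 2" by blast
    show "\<exists>M. \<forall>m\<ge>M. \<forall>n\<ge>M. dist (q m) (q n) < e"
    proof (intro exI allI impI)
      fix m n assume "M \<le> m" "M \<le> n"
      then have "dist (f m) (f n) < e / 2" by (rule M)
      moreover have "\<bar>p m - p n\<bar> + \<bar>q m - q n\<bar> \<le> 2 * dist (f m) (f n)" by (rule diff)
      moreover have "0 \<le> \<bar>p m - p n\<bar>" by simp
      ultimately show "dist (q m) (q n) < e" unfolding dist_real_def by linarith
    qed
  qed
  ultimately obtain P R where "p \<longlonglongrightarrow> P" "q \<longlonglongrightarrow> R"
    using Cauchy_convergent_iff convergent_def by blast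
  then have "(\<lambda>n. of_real (p n) + of_real (q n) * i :: 'k) \<longlonglongrightarrow> of_real P + of_real R * i"
    by (intro tendsto_intros)
  then show ?thesis unfolding fpq[symmetric] convergent_def by blast
qed

locale bctx =
  fixes sc :: "'k::real_normed_field \<Rightarrow> 'a::banach \<Rightarrow> 'a" and e :: "nat \<Rightarrow> 'a"
  assumes nsa: "normed_scalar_action sc" and sb: "schauder_basis sc e" and sn: "semi_normalized e"
begin

lemma sc_addl: "sc (a + b) x = sc a x + sc b x" using nsa unfolding normed_scalar_action_def by blast
lemma sc_addr: "sc a (x + y) = sc a x + sc a y" using nsa unfolding normed_scalar_action_def by blast
lemma sc_mult: "sc (a * b) x = sc a (sc b x)" using nsa unfolding normed_scalar_action_def by blast
lemma sc_one: "sc 1 x = x" using nsa unfolding normed_scalar_action_def by blast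
lemma sc_ofreal: "sc (of_real r) x = scaleR r x" using nsa unfolding normed_scalar_action_def by blast
lemma norm_sc: "norm (sc a x) = norm a * norm x" using nsa unfolding normed_scalar_action_def by blast

lemma sc_0l [simp]: "sc 0 x = 0" using sc_ofreal[of 0 x] by simp
lemma sc_0r [simp]: "sc a 0 = 0" using norm_sc[of a 0] by simp
lemma sc_minusl: "sc (- a) x = - sc a x"
  using sc_addl[of "-a" a x] by (simp add: eq_neg_iff_add_eq_0)
lemma sc_diffl: "sc (a - b) x = sc a x - sc b x"
  using sc_addl[of a "-b" x] by (simp add: sc_minusl)
lemma sc_minusr: "sc a (- x) = - sc a x"
  using sc_addr[of a "-x" x] by (simp add: eq_neg_iff_add_eq_0)
lemma sc_diffr: "sc a (x - y) = sc a x - sc a y"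
  using sc_addr[of a x "-y"] by (simp add: sc_minusr)

lemma sc_suml: "sc (\<Sum>i\<in>I. c i) x = (\<Sum>i\<in>I. sc (c i) x)"
  by (induction I rule: infinite_finite_induct) (simp_all add: sc_addl)
lemma sc_sumr: "sc a (\<Sum>i\<in>I. f i) = (\<Sum>i\<in>I. sc a (f i))"
  by (induction I rule: infinite_finite_induct) (simp_all add: sc_addr)

lemma sc_scaleR: "sc a (scaleR r x) = scaleR r (sc a x)"
  by (metis sc_mult sc_ofreal mult.commute)

lemma bl_sc: "bounded_linear (sc a)"
  by (rule bounded_linear_intro[of _ "norm a"]) (simp_all add: sc_addr sc_scaleR norm_sc mult.commute)

lemma bl_scl: "bounded_linear (\<lambda>c. sc c x)"
proof (rule bounded_linear_intro[of _ "norm x"])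
  show "sc (b + c) x = sc b x + sc c x" for b c by (rule sc_addl)
  show "sc (r *\<^sub>R b) x = r *\<^sub>R sc b x" for r b
    by (simp add: scaleR_conv_of_real sc_mult sc_ofreal)
  show "norm (sc b x) \<le> norm b * norm x" for b by (simp add: norm_sc)
qed

lemma sc_tendsto: "f \<longlonglongrightarrow> L \<Longrightarrow> (\<lambda>n. sc a (f n)) \<longlonglongrightarrow> sc a L"
  using bounded_linear.tendsto[OF bl_sc] .

lemma scl_tendsto: "c \<longlonglongrightarrow> c0 \<Longrightarrow> (\<lambda>n. sc (c n) x) \<longlonglongrightarrow> sc c0 x"
  using bounded_linear.tendsto[OF bl_scl] .

definition S :: "nat \<Rightarrow> 'a \<Rightarrow> 'a" where "S n x = (\<Sum>k<n. sc (coord sc e k x) (e k))"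

lemma coord_eq:
  assumes "(\<lambda>n. \<Sum>k<n. sc (c k) (e k)) \<longlonglongrightarrow> x"
  shows "coord sc e j x = c j"
proof -
  have ex: "\<exists>!c. (\<lambda>n. \<Sum>k<n. sc (c k) (e k)) \<longlonglongrightarrow> x" using sb unfolding schauder_basis_def by blast
  have "(THE c. (\<lambda>n. \<Sum>k<n. sc (c k) (e k)) \<longlonglongrightarrow> x) = c"
  proof (rule the_equality)
    show "(\<lambda>n. \<Sum>k<n. sc (c k) (e k)) \<longlonglongrightarrow> x" by (rule assms)
  next
    fix c' assume "(\<lambda>n. \<Sum>k<n. sc (c' k) (e k)) \<longlonglongrightarrow> x"
    then show "c' = c" using ex assms by blast
  qed
  then show ?thesis unfolding coord_def by simp
qed

lemma S_lim: "(\<lambda>n. S n x) \<longlonglongrightarrow> x"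
proof -
  have ex: "\<exists>!c. (\<lambda>n. \<Sum>k<n. sc (c k) (e k)) \<longlonglongrightarrow> x" using sb unfolding schauder_basis_def by blast
  have "(\<lambda>n. \<Sum>k<n. sc ((THE c. (\<lambda>n. \<Sum>k<n. sc (c k) (e k)) \<longlonglongrightarrow> x) k) (e k)) \<longlonglongrightarrow> x"
    using theI'[OF ex] .
  then show ?thesis unfolding S_def coord_def .
qed

lemma coord_fin:
  assumes "finite F"
  shows "coord sc e j (\<Sum>i\<in>F. sc (c i) (e i)) = (if j \<in> F then c j else 0)"
proof -
  define c' where "c' k = (if k \<in> F then c k else 0)" for k
  obtain N where N: "F \<subseteq> {..<N}" using finite_nat_bounded[OF assms] by blast
  have "eventually (\<lambda>n. (\<Sum>i\<in>F. sc (c i) (e i)) = (\<Sum>k<n. sc (c' k) (e k))) sequentially"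
    unfolding eventually_sequentially
  proof (intro exI allI impI)
    fix n assume "N \<le> n"
    then have Fn: "F \<subseteq> {..<n}" using N by auto
    have "(\<Sum>k<n. sc (c' k) (e k)) = (\<Sum>k<n. if k \<in> F then sc (c k) (e k) else 0)"
      by (intro sum.cong) (auto simp: c'_def)
    also have "\<dots> = (\<Sum>k\<in>{..<n} \<inter> F. sc (c k) (e k))"
      by (simp add: sum.inter_restrict)
    also have "{..<n} \<inter> F = F" using Fn by auto
    finally show "(\<Sum>i\<in>F. sc (c i) (e i)) = (\<Sum>k<n. sc (c' k) (e k))" by simp
  qed
  then have "(\<lambda>n. \<Sum>k<n. sc (c' k) (e k)) \<longlonglongrightarrow> (\<Sum>i\<in>F. sc (c i) (e i))"
    by (rule Lim_transform_eventually[OF tendsto_const])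
  then show ?thesis using coord_eq by (simp add: c'_def)
qed

lemma coord_zero [simp]: "coord sc e j 0 = 0"
  using coord_fin[of "{}" j] by simp

lemma coord_add: "coord sc e j (x + y) = coord sc e j x + coord sc e j y"
proof -
  have "(\<lambda>n. S n x + S n y) \<longlonglongrightarrow> x + y" by (intro tendsto_intros S_lim)
  moreover have "S n x + S n y = (\<Sum>k<n. sc (coord sc e k x + coord sc e k y) (e k))" for n
    unfolding S_def sc_addl sum.distrib ..
  ultimately have lim: "(\<lambda>n. \<Sum>k<n. sc (coord sc e k x + coord sc e k y) (e k)) \<longlonglongrightarrow> x + y"
    by (simp only:)
  show ?thesis using coord_eq[OF lim] by (simp only:)
qed

lemma coord_sc: "coord sc e j (sc a x) = a * coord sc e j x"
proof -
  have "(\<lambda>n. sc a (S n x)) \<longlonglongrightarrow> sc a x" by (intro sc_tendsto S_lim)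
  moreover have "sc a (S n x) = (\<Sum>k<n. sc (a * coord sc e k x) (e k))" for n
    unfolding S_def sc_sumr sc_mult ..
  ultimately have lim: "(\<lambda>n. \<Sum>k<n. sc (a * coord sc e k x) (e k)) \<longlonglongrightarrow> sc a x"
    by (simp only:)
  show ?thesis using coord_eq[OF lim] by (simp only:)
qed

lemma coord_scaleR: "coord sc e j (scaleR r x) = of_real r * coord sc e j x"
  using coord_sc[of j "of_real r" x] by (simp add: sc_ofreal)

lemma coord_minus: "coord sc e j (- x) = - coord sc e j x"
  using coord_scaleR[of j "-1" x] by simp

lemma coord_diff: "coord sc e j (x - y) = coord sc e j x - coord sc e j y"
  using coord_add[of j x "-y"] by (simp add: coord_minus)

lemma coord_sum: "coord sc e j (\<Sum>i\<in>I. f i) = (\<Sum>i\<in>I. coord sc e j (f i))"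
  by (induction I rule: infinite_finite_induct) (simp_all add: coord_add)

abbreviation P :: "nat set \<Rightarrow> 'a \<Rightarrow> 'a" where "P A x \<equiv> greedy_sum sc e x A"

lemma P_def': "P A x = (\<Sum>j\<in>A. sc (coord sc e j x) (e j))" by (simp add: greedy_sum_def)

lemma S_P: "S n x = P {..<n} x" by (simp add: S_def P_def')

lemma P_add: "P A (x + y) = P A x + P A y"
  by (simp add: P_def' coord_add sc_addl sum.distrib)
lemma P_diff: "P A (x - y) = P A x - P A y"
  by (simp add: P_def' coord_diff sc_diffl sum_subtractf)
lemma P_zero [simp]: "P A 0 = 0" by (simp add: P_def')
lemma P_sc: "P A (sc a x) = sc a (P A x)"
  by (simp add: P_def' coord_sc sc_mult sc_sumr)
lemma P_scaleR: "P A (scaleR r x) = scaleR r (P A x)"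
  using P_sc[of "of_real r" x A] by (simp add: sc_ofreal)
lemma P_sum: "P A (\<Sum>i\<in>I. f i) = (\<Sum>i\<in>I. P A (f i))"
  by (induction I rule: infinite_finite_induct) (simp_all add: P_add)

lemma coord_P: "finite B \<Longrightarrow> coord sc e j (P B x) = (if j \<in> B then coord sc e j x else 0)"
  unfolding P_def' by (rule coord_fin)

lemma P_P: "finite A \<Longrightarrow> finite B \<Longrightarrow> P A (P B x) = P (A \<inter> B) x"
proof -
  assume A: "finite A" and B: "finite B"
  have "P A (P B x) = (\<Sum>j\<in>A. if j \<in> B then sc (coord sc e j x) (e j) else 0)"
    unfolding P_def'[of _ A] coord_P[OF B] by (intro sum.cong) auto
  also have "\<dots> = P (A \<inter> B) x"
    using A by (simp add: sum.inter_restrict P_def')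
  finally show ?thesis .
qed

lemma P_single: "P {j} x = sc (coord sc e j x) (e j)" by (simp add: P_def')

lemma P_union: "A \<inter> B = {} \<Longrightarrow> finite A \<Longrightarrow> finite B \<Longrightarrow> P (A \<union> B) x = P A x + P B x"
  by (simp add: P_def' sum.union_disjoint)

lemma sn_bounds: obtains a0 b0 :: real where "0 < a0" "\<And>n. a0 \<le> norm (e n)" "\<And>n. norm (e n) \<le> b0"
  using sn unfolding semi_normalized_def by blast

lemma coord_norm_le:
  assumes "0 < a0" "\<And>n. a0 \<le> norm (e n)"
  shows "norm (coord sc e j x) \<le> norm (P {j} x) / a0"
proof -
  have "norm (coord sc e j x) * a0 \<le> norm (coord sc e j x) * norm (e j)"
    using assms by (intro mult_left_mono) auto
  also have "\<dots> = norm (P {j} x)" by (simp add: P_single norm_sc)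
  finally show ?thesis using assms by (simp add: field_simps)
qed

lemma coord_tendsto_0: "(\<lambda>n. coord sc e n x) \<longlonglongrightarrow> 0"
proof -
  obtain a0 b0 where a0: "0 < a0" "\<And>n. a0 \<le> norm (e n)" using sn_bounds by metis
  have "(\<lambda>n. S (Suc n) x - S n x) \<longlonglongrightarrow> x - x"
    by (intro tendsto_intros S_lim LIMSEQ_Suc)
  then have "(\<lambda>n. P {n} x) \<longlonglongrightarrow> 0" by (simp add: S_def P_single)
  then have "(\<lambda>n. norm (P {n} x)) \<longlonglongrightarrow> 0" by (rule tendsto_norm_zero)
  then have "(\<lambda>n. norm (P {n} x) / a0) \<longlonglongrightarrow> 0 / a0"
    by (intro tendsto_divide tendsto_const) (use a0 in auto)
  then have "(\<lambda>n. norm (P {n} x) / a0) \<longlonglongrightarrow> 0" by simp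
  then show ?thesis
    by (rule Lim_null_comparison[rotated]) (use coord_norm_le[OF a0] in auto)
qed

lemma coord_bounded: "\<exists>M. \<forall>n. norm (coord sc e n x) \<le> M"
proof -
  have "Bseq (\<lambda>n. coord sc e n x)" using coord_tendsto_0 by (intro convergent_imp_Bseq convergentI)
  then obtain K where "\<forall>n. norm (coord sc e n x) \<le> K" unfolding Bseq_def by blast
  then show ?thesis by blast
qed

end

context bctx
begin

context
  fixes N :: "'a \<Rightarrow> real"
  assumes eqN: "equivalent_norm sc N"
begin

lemma N_sc: "N (sc a x) = norm a * N x" using eqN unfolding equivalent_norm_def is_norm_over_def by blast
lemma N_tri: "N (x + y) \<le> N x + N y" using eqN unfolding equivalent_norm_def is_norm_over_def by blast
lemma N_zero [simp]: "N 0 = 0" using N_sc[of 0 0] by simp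
lemma N_scaleR: "N (scaleR r x) = \<bar>r\<bar> * N x" using N_sc[of "of_real r" x] by (simp add: sc_ofreal)
lemma N_minus: "N (- x) = N x" using N_scaleR[of "-1" x] by simp
lemma N_nonneg: "0 \<le> N x"
  using N_tri[of x "-x"] N_minus[of x] by simp
lemma N_bounds: obtains c C where "0 < c" "0 < C" "\<And>x. c * norm x \<le> N x" "\<And>x. N x \<le> C * norm x"
  using eqN unfolding equivalent_norm_def by blast
lemma N_diff: "\<bar>N x - N y\<bar> \<le> N (x - y)"
  using N_tri[of "x - y" y] N_tri[of "y - x" x] N_minus[of "x - y"] by (simp add: abs_le_iff)

lemma N_tendsto:
  assumes "f \<longlonglongrightarrow> L"
  shows "(\<lambda>n. N (f n)) \<longlonglongrightarrow> N L"
proof -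
  obtain c C where C: "0 < C" "\<And>x. N x \<le> C * norm x" using N_bounds by metis
  have "(\<lambda>n. f n - L) \<longlonglongrightarrow> 0" using assms by (simp add: LIM_zero)
  then have lim: "(\<lambda>n. C * norm (f n - L)) \<longlonglongrightarrow> 0"
    using tendsto_mult_right_zero tendsto_norm_zero by blast
  have bnd: "\<forall>n. norm (N (f n) - N L) \<le> C * norm (f n - L)"
    using N_diff C(2) by (metis order_trans real_norm_def)
  have "(\<lambda>n. N (f n) - N L) \<longlonglongrightarrow> 0"
    by (rule Lim_null_comparison[OF always_eventually[OF bnd] lim])
  then show ?thesis by (simp add: LIM_zero_iff)
qed

context
  assumes qg: "one_quasi_greedy sc e N"
begin

lemma keep_small:
  assumes F: "finite F" and j: "j \<notin> F" and cF: "\<And>i. i \<in> F \<Longrightarrow> c i \<noteq> 0"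
    and small: "\<And>i. i \<in> F \<Longrightarrow> norm t \<le> norm (c i)"
  shows "N (\<Sum>i\<in>F. sc (c i) (e i)) \<le> N ((\<Sum>i\<in>F. sc (c i) (e i)) + sc t (e j))"
proof -
  define c' where "c' = c(j := t)"
  define v where "v = (\<Sum>i\<in>F. sc (c i) (e i)) + sc t (e j)"
  have v: "v = (\<Sum>i\<in>insert j F. sc (c' i) (e i))"
  proof -
    have "(\<Sum>i\<in>insert j F. sc (c' i) (e i)) = sc (c' j) (e j) + (\<Sum>i\<in>F. sc (c' i) (e i))"
      using F j by simp
    also have "(\<Sum>i\<in>F. sc (c' i) (e i)) = (\<Sum>i\<in>F. sc (c i) (e i))"
      using j by (intro sum.cong) (auto simp: c'_def)
    finally show ?thesis by (simp add: v_def c'_def add.commute)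
  qed
  have cv: "coord sc e l v = (if l \<in> insert j F then c' l else 0)" for l
    unfolding v by (rule coord_fin) (use F in simp)
  have gs: "greedy_set sc e v (card F) F"
    unfolding greedy_set_def
  proof (intro conjI ballI allI impI)
    show "finite F" by (rule F)
    show "card F = card F" ..
    fix i l assume i: "i \<in> F" and l: "l \<notin> F"
    have ij: "i \<noteq> j" using i j by auto
    have ci: "coord sc e i v = c i" using i ij by (simp add: cv c'_def)
    show "norm (coord sc e l v) \<le> norm (coord sc e i v)"
    proof (cases "l = j")
      case True then show ?thesis using ci small[OF i] by (simp add: cv c'_def)
    next
      case False then show ?thesis using l by (simp add: cv)
    qed
  qed
  have "greedy_sum sc e v F = (\<Sum>i\<in>F. sc (c i) (e i))"
    unfolding greedy_sum_def using j by (intro sum.cong) (auto simp: cv c'_def)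
  moreover have "N (greedy_sum sc e v F) \<le> N v" using qg gs unfolding one_quasi_greedy_def by blast
  ultimately show ?thesis by (simp add: v_def)
qed

lemma keep:
  assumes F: "finite F" and j: "j \<notin> F"
  shows "N (\<Sum>i\<in>F. sc (c i) (e i)) \<le> N ((\<Sum>i\<in>F. sc (c i) (e i)) + sc t (e j))"
proof -
  define F' where "F' = {i\<in>F. c i \<noteq> 0}"
  have F': "finite F'" "F' \<subseteq> F" using F by (auto simp: F'_def)
  have u: "(\<Sum>i\<in>F. sc (c i) (e i)) = (\<Sum>i\<in>F'. sc (c i) (e i))"
    unfolding F'_def using F by (intro sum.mono_neutral_right) auto
  define u where "u = (\<Sum>i\<in>F'. sc (c i) (e i))"
  show ?thesis
  proof (cases "F' = {}")
    case True
    then show ?thesis using u N_nonneg by (simp add: u_def)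
  next
    case False
    define m where "m = Min ((\<lambda>i. norm (c i)) ` F')"
    have mle: "\<And>i. i \<in> F' \<Longrightarrow> m \<le> norm (c i)" unfolding m_def using F'(1) by (intro Min_le) auto
    have m0: "0 < m" unfolding m_def using F'(1) False by (subst Min_gr_iff) (auto simp: F'_def)
    have sm: "N u \<le> N (u + sc t' (e j))" if "norm t' \<le> m" for t'
    proof -
      have "\<And>i. i \<in> F' \<Longrightarrow> norm t' \<le> norm (c i)" using that mle by (meson order_trans)
      moreover have "\<And>i. i \<in> F' \<Longrightarrow> c i \<noteq> 0" by (simp add: F'_def)
      moreover have "j \<notin> F'" using j F' by auto
      ultimately show ?thesis unfolding u_def by (intro keep_small F')
    qed
    show ?thesis
    proof (cases "norm t \<le> m")
      case True
      have "N u \<le> N (u + sc t (e j))" by (rule sm[OF True])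
      then show ?thesis using u by (simp only: u_def)
    next
      case False
      define \<epsilon> where "\<epsilon> = m / norm t"
      have tpos: "0 < norm t" using False m0 by linarith
      have eps: "0 < \<epsilon>" "\<epsilon> < 1" using False m0 tpos by (auto simp: \<epsilon>_def field_simps)
      define t' where "t' = of_real \<epsilon> * t"
      have "norm t' = \<epsilon> * norm t" using eps(1) unfolding t'_def norm_mult norm_of_real by simp
      also have "\<epsilon> * norm t = m" using tpos unfolding \<epsilon>_def by simp
      finally have nt': "norm t' \<le> m" by simp
      have st': "sc t' (e j) = scaleR \<epsilon> (sc t (e j))" unfolding t'_def sc_mult sc_ofreal ..
      have eq: "u + sc t' (e j) = scaleR (1 - \<epsilon>) u + scaleR \<epsilon> (u + sc t (e j))"
        unfolding st' scaleR_diff_left scaleR_add_right by simp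
      have "N u \<le> N (scaleR (1 - \<epsilon>) u + scaleR \<epsilon> (u + sc t (e j)))" using sm[OF nt'] unfolding eq .
      also have "\<dots> \<le> N (scaleR (1 - \<epsilon>) u) + N (scaleR \<epsilon> (u + sc t (e j)))" by (rule N_tri)
      also have "\<dots> = (1 - \<epsilon>) * N u + \<epsilon> * N (u + sc t (e j))"
        unfolding N_scaleR using eps by simp
      finally have "\<epsilon> * N u \<le> \<epsilon> * N (u + sc t (e j))" by (simp add: algebra_simps)
      then have "N u \<le> N (u + sc t (e j))" using eps(1) by (rule mult_left_le_imp_le)
      then show ?thesis using u by (simp only: u_def)
    qed
  qed
qed

lemma remove:
  assumes F: "finite F" and D: "finite D"
  shows "N (\<Sum>i\<in>F - D. sc (c i) (e i)) \<le> N (\<Sum>i\<in>F. sc (c i) (e i))"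
  using D
proof (induction D rule: finite_induct)
  case empty
  then show ?case by simp
next
  case (insert d D)
  show ?case
  proof (cases "d \<in> F - D")
    case True
    have eq0: "(\<Sum>i\<in>F - D. sc (c i) (e i)) = sc (c d) (e d) + (\<Sum>i\<in>(F - D) - {d}. sc (c i) (e i))"
    proof -
      have fin: "finite (F - D)" using F by simp
      show ?thesis using sum.remove[OF fin True, of "\<lambda>i. sc (c i) (e i)"] by (simp only:)
    qed
    have eq: "(\<Sum>i\<in>F - D. sc (c i) (e i)) = (\<Sum>i\<in>(F - D) - {d}. sc (c i) (e i)) + sc (c d) (e d)"
      unfolding eq0 by (rule add.commute)
    have "N (\<Sum>i\<in>(F - D) - {d}. sc (c i) (e i)) \<le> N (\<Sum>i\<in>F - D. sc (c i) (e i))"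
      unfolding eq by (rule keep) (use F in simp_all)
    also have "\<dots> \<le> N (\<Sum>i\<in>F. sc (c i) (e i))" by (rule insert.IH)
    moreover have "F - insert d D = (F - D) - {d}" by auto
    ultimately show ?thesis by (simp only:)
  next
    case False
    then have "F - insert d D = F - D" by auto
    then show ?thesis using insert.IH by simp
  qed
qed

lemma suppress:
  assumes B: "finite B"
  shows "N (x - P B x) \<le> N x"
proof -
  obtain n0 where n0: "B \<subseteq> {..<n0}" using finite_nat_bounded[OF B] by blast
  have le: "N (S n x - P B x) \<le> N (S n x)" if "n0 \<le> n" for n
  proof -
    have Bn: "B \<subseteq> {..<n}" using n0 that by auto
    have "S n x - P B x = (\<Sum>k\<in>{..<n} - B. sc (coord sc e k x) (e k))"
      unfolding S_def P_def' using Bn by (simp add: sum_diff)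
    also have "N \<dots> \<le> N (S n x)" unfolding S_def by (rule remove) (use B in auto)
    finally show ?thesis .
  qed
  have "(\<lambda>n. N (S n x - P B x)) \<longlonglongrightarrow> N (x - P B x)"
    by (intro N_tendsto tendsto_intros S_lim)
  moreover have "(\<lambda>n. N (S n x)) \<longlonglongrightarrow> N x" by (intro N_tendsto S_lim)
  ultimately show ?thesis using le by (intro LIMSEQ_le) auto
qed

lemma qg_unconditional: "unconditional_basis sc e"
  unfolding unconditional_basis_def
proof (intro conjI allI impI)
  show "schauder_basis sc e" by (rule sb)
  fix x and \<pi> :: "nat \<Rightarrow> nat" assume bij: "bij \<pi>"
  obtain c C where c: "0 < c" "0 < C" "\<And>x. c * norm x \<le> N x" "\<And>x. N x \<le> C * norm x"
    using N_bounds by metis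
  show "(\<lambda>n. \<Sum>k<n. sc (coord sc e (\<pi> k) x) (e (\<pi> k))) \<longlonglongrightarrow> x"
  proof (rule LIMSEQ_I)
    fix \<epsilon> :: real assume eps: "0 < \<epsilon>"
    define \<delta> where "\<delta> = \<epsilon> * c / C"
    have d0: "0 < \<delta>" using eps c by (simp add: \<delta>_def)
    obtain n where n: "norm (S n x - x) < \<delta>" using LIMSEQ_D[OF S_lim d0] by blast
    obtain K0 where K0: "inv \<pi> ` {..<n} \<subseteq> {..<K0}" using finite_nat_bounded[of "inv \<pi> ` {..<n}"] by blast
    show "\<exists>no. \<forall>K\<ge>no. norm ((\<Sum>k<K. sc (coord sc e (\<pi> k) x) (e (\<pi> k))) - x) < \<epsilon>"
    proof (intro exI allI impI)
      fix K assume K: "K0 \<le> K"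
      define B where "B = \<pi> ` {..<K}"
      have finB: "finite B" by (simp add: B_def)
      have nB: "{..<n} \<subseteq> B"
      proof
        fix i assume "i \<in> {..<n}"
        then have "inv \<pi> i < K" using K0 K by auto
        moreover have "\<pi> (inv \<pi> i) = i" using bij by (simp add: bij_is_surj surj_f_inv_f)
        ultimately show "i \<in> B" unfolding B_def by (intro image_eqI[where x = "inv \<pi> i"]) auto
      qed
      have "inj_on \<pi> {..<K}" by (rule inj_on_subset[OF bij_is_inj[OF bij]]) simp
      then have TK: "(\<Sum>k<K. sc (coord sc e (\<pi> k) x) (e (\<pi> k))) = P B x"
        unfolding P_def' B_def by (simp add: sum.reindex)
      define w where "w = x - S n x"
      have "P B w = P B x - P (B \<inter> {..<n}) x"
        unfolding w_def S_P P_diff using finB by (simp add: P_P)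
      also have "B \<inter> {..<n} = {..<n}" using nB by auto
      finally have "w - P B w = x - P B x" by (simp add: w_def S_P)
      then have "N (x - P B x) \<le> N w" using suppress[OF finB, of w] by simp
      also have "\<dots> \<le> C * norm w" by (rule c(4))
      also have "\<dots> < C * \<delta>" using n c by (simp add: w_def norm_minus_commute)
      also have "\<dots> = \<epsilon> * c" using c by (simp add: \<delta>_def)
      finally have "c * norm (x - P B x) < \<epsilon> * c" using c(3)[of "x - P B x"] by linarith
      then have "norm (x - P B x) < \<epsilon>" using c by (simp add: mult.commute)
      then show "norm ((\<Sum>k<K. sc (coord sc e (\<pi> k) x) (e (\<pi> k))) - x) < \<epsilon>"
        by (simp add: TK norm_minus_commute)
    qed
  qed
qed

end
end
end

lemma exists_perm:
  assumes "finite J" "A \<subseteq> J" "I \<subseteq> J" "card I = card A"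
  shows "\<exists>\<sigma>. bij_betw \<sigma> J J \<and> \<sigma> ` I = A"
proof -
  have fin: "finite I" "finite A" using assms finite_subset by blast+
  obtain h1 where h1: "bij_betw h1 I A" using finite_same_card_bij[OF fin assms(4)] by blast
  have "card (J - I) = card (J - A)"
    using assms fin by (simp add: card_Diff_subset)
  then obtain h2 where h2: "bij_betw h2 (J - I) (J - A)"
    using finite_same_card_bij assms(1) by (metis finite_Diff)
  define \<sigma> where "\<sigma> k = (if k \<in> I then h1 k else h2 k)" for k
  have "bij_betw \<sigma> I A" using h1 by (rule bij_betw_cong[THEN iffD1, rotated]) (simp add: \<sigma>_def)
  moreover have "bij_betw \<sigma> (J - I) (J - A)" using h2 by (rule bij_betw_cong[THEN iffD1, rotated]) (simp add: \<sigma>_def)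
  ultimately have "bij_betw \<sigma> (I \<union> (J - I)) (A \<union> (J - A))"
    by (rule bij_betw_combine) auto
  moreover have "I \<union> (J - I) = J" "A \<union> (J - A) = J" using assms by auto
  ultimately have "bij_betw \<sigma> J J" by simp
  moreover have "\<sigma> ` I = A" using \<open>bij_betw \<sigma> I A\<close> by (simp add: bij_betw_def)
  ultimately show ?thesis by blast
qed

locale blocks =
  fixes b :: "nat \<Rightarrow> nat" and \<sigma> :: "nat \<Rightarrow> nat \<Rightarrow> nat"
  assumes smb: "strict_mono b" and b0: "b 0 = 0"
    and sig: "\<And>i. bij_betw (\<sigma> i) {b i..<b (Suc i)} {b i..<b (Suc i)}"
begin

definition \<pi> :: "nat \<Rightarrow> nat" where "\<pi> k = \<sigma> (LEAST i. k < b (Suc i)) k"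

lemma \<pi>_block:
  assumes "b i \<le> k" "k < b (Suc i)"
  shows "\<pi> k = \<sigma> i k"
proof -
  have "(LEAST i. k < b (Suc i)) = i"
  proof (rule Least_equality)
    show "k < b (Suc i)" by (rule assms(2))
    fix i' assume "k < b (Suc i')"
    show "i \<le> i'"
    proof (rule ccontr)
      assume "\<not> i \<le> i'"
      then have "Suc i' \<le> i" by simp
      then have "b (Suc i') \<le> b i" using smb by (simp add: strict_mono_less_eq)
      then show False using assms \<open>k < b (Suc i')\<close> by simp
    qed
  qed
  then show ?thesis by (simp add: \<pi>_def)
qed

lemma \<pi>_init: "bij_betw \<pi> {..<b i} {..<b i}"
proof (induction i)
  case 0
  then show ?case by (simp add: b0 bij_betw_def)
next
  case (Suc i)
  have "bij_betw \<pi> {b i..<b (Suc i)} {b i..<b (Suc i)}"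
    using sig[of i] by (rule bij_betw_cong[THEN iffD1, rotated]) (auto intro: \<pi>_block[symmetric])
  then have "bij_betw \<pi> ({..<b i} \<union> {b i..<b (Suc i)}) ({..<b i} \<union> {b i..<b (Suc i)})"
    using Suc by (intro bij_betw_combine) auto
  moreover have "{..<b i} \<union> {b i..<b (Suc i)} = {..<b (Suc i)}"
    using strict_monoD[OF smb, of i "Suc i"] by auto
  ultimately show ?case by simp
qed

lemma b_ge: "n \<le> b n" using smb by (rule seq_suble)

lemma \<pi>_bij: "bij \<pi>"
  unfolding bij_def
proof
  show "inj \<pi>"
  proof (rule injI)
    fix k1 k2 assume eq: "\<pi> k1 = \<pi> k2"
    define i where "i = Suc (max k1 k2)"
    have "k1 \<in> {..<b i}" "k2 \<in> {..<b i}" using b_ge[of i] by (auto simp: i_def)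
    then show "k1 = k2" using \<pi>_init[of i] eq by (auto simp: bij_betw_def inj_on_def)
  qed
  show "surj \<pi>"
  proof -
    have "y \<in> range \<pi>" for y
    proof -
      have "y \<in> {..<b (Suc y)}" using b_ge[of "Suc y"] by simp
      then show ?thesis using \<pi>_init[of "Suc y"] by (auto simp: bij_betw_def)
    qed
    then show ?thesis by auto
  qed
qed

end


context bctx
begin

lemma P_norm_le_sum: "finite A \<Longrightarrow> norm (P A x) \<le> (\<Sum>j\<in>A. norm (P {j} x))"
  unfolding P_def'[of x A] by (simp add: P_single norm_sum)

lemma unc_big:
  assumes unb: "\<not> (\<exists>M. \<forall>A. finite A \<longrightarrow> norm (P A x) \<le> M)"
  shows "\<exists>A. finite A \<and> A \<subseteq> {n..} \<and> M < norm (P A x)"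
proof -
  define D where "D = (\<Sum>j<n. norm (P {j} x))"
  obtain A0 where A0: "finite A0" "M + D < norm (P A0 x)" using unb by (meson not_le)
  define A where "A = A0 - {..<n}"
  have eqA: "P A0 x = P A x + P (A0 \<inter> {..<n}) x"
  proof -
    have "A0 = A \<union> (A0 \<inter> {..<n})" by (auto simp: A_def)
    then have "P A0 x = P (A \<union> (A0 \<inter> {..<n})) x" by simp
    also have "\<dots> = P A x + P (A0 \<inter> {..<n}) x"
      by (rule P_union) (use A0 in \<open>auto simp: A_def\<close>)
    finally show ?thesis .
  qed
  moreover have "norm (P (A0 \<inter> {..<n}) x) \<le> D"
  proof -
    have "norm (P (A0 \<inter> {..<n}) x) \<le> (\<Sum>j\<in>A0 \<inter> {..<n}. norm (P {j} x))"
      by (rule P_norm_le_sum) simp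
    also have "\<dots> \<le> D" unfolding D_def by (rule sum_mono2) auto
    finally show ?thesis .
  qed
  moreover have "norm (P A0 x) \<le> norm (P A x) + norm (P (A0 \<inter> {..<n}) x)"
    unfolding eqA by (rule norm_triangle_ineq)
  ultimately have "M < norm (P A x)" using A0 by linarith
  moreover have "finite A" "A \<subseteq> {n..}" using A0 by (auto simp: A_def)
  ultimately show ?thesis by blast
qed

lemma unc_pointwise:
  assumes unc: "unconditional_basis sc e"
  shows "\<exists>M. \<forall>A. finite A \<longrightarrow> norm (P A x) \<le> M"
proof (rule ccontr)
  assume unb: "\<not> ?thesis"
  define nx where "nx n M = (SOME A. finite A \<and> A \<subseteq> {n..} \<and> M < norm (P A x))" for n M
  have nx: "finite (nx n M)" "nx n M \<subseteq> {n..}" "M < norm (P (nx n M) x)" for n M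
    using someI_ex[OF unc_big[OF unb, of n M]] unfolding nx_def by blast+
  define step where "step i bi = Suc (Max (insert bi (nx bi (real i + norm (S bi x)))))" for i bi
  define b where "b = rec_nat 0 step"
  have b0: "b 0 = 0" by (simp add: b_def)
  have bS: "b (Suc i) = step i (b i)" for i by (simp add: b_def)
  define A where "A i = nx (b i) (real i + norm (S (b i) x))" for i
  have Afin: "finite (A i)" for i using nx by (simp add: A_def)
  have Ablk: "A i \<subseteq> {b i..<b (Suc i)}" for i
  proof
    fix k assume k: "k \<in> A i"
    then have "b i \<le> k" using nx(2) by (auto simp: A_def)
    moreover have "k \<le> Max (insert (b i) (A i))" using k Afin by simp
    ultimately show "k \<in> {b i..<b (Suc i)}" by (simp add: bS step_def A_def)
  qed
  have bless: "b i < b (Suc i)" for i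
  proof -
    have "b i \<le> Max (insert (b i) (A i))" using Afin by simp
    then show ?thesis by (simp add: bS step_def A_def)
  qed
  have smb: "strict_mono b" using bless by (rule strict_monoI_Suc)
  have Abig: "real i + norm (S (b i) x) < norm (P (A i) x)" for i using nx by (simp add: A_def)
  define I where "I i = {b i..<b i + card (A i)}" for i
  have Iblk: "I i \<subseteq> {b i..<b (Suc i)}" for i
  proof -
    have "card (A i) \<le> card {b i..<b (Suc i)}" using Ablk by (intro card_mono) auto
    then show ?thesis by (auto simp: I_def)
  qed
  have exs: "\<exists>\<sigma>. bij_betw \<sigma> {b i..<b (Suc i)} {b i..<b (Suc i)} \<and> \<sigma> ` I i = A i" for i
    by (rule exists_perm) (use Ablk Iblk in \<open>auto simp: I_def\<close>)
  define \<sigma> where "\<sigma> i = (SOME \<sigma>. bij_betw \<sigma> {b i..<b (Suc i)} {b i..<b (Suc i)} \<and> \<sigma> ` I i = A i)" for i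
  have sigs: "bij_betw (\<sigma> i) {b i..<b (Suc i)} {b i..<b (Suc i)}" "\<sigma> i ` I i = A i" for i
    using someI_ex[OF exs[of i]] unfolding \<sigma>_def by blast+
  interpret blocks b \<sigma> by unfold_locales (use smb b0 sigs in auto)
  define g where "g j = sc (coord sc e j x) (e j)" for j
  define T where "T K = (\<Sum>k<K. g (\<pi> k))" for K
  have Tconv: "T \<longlonglongrightarrow> x"
    using unc \<pi>_bij unfolding unconditional_basis_def T_def g_def by blast
  have Tval: "T (b i + card (A i)) = S (b i) x + P (A i) x" for i
  proof -
    have "{..<b i + card (A i)} = {..<b i} \<union> I i" by (auto simp: I_def)
    then have "T (b i + card (A i)) = (\<Sum>k\<in>{..<b i} \<union> I i. g (\<pi> k))"
      unfolding T_def by simp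
    also have "\<dots> = (\<Sum>k<b i. g (\<pi> k)) + (\<Sum>k\<in>I i. g (\<pi> k))"
      by (rule sum.union_disjoint) (auto simp: I_def)
    also have "(\<Sum>k<b i. g (\<pi> k)) = (\<Sum>k<b i. g k)"
      using sum.reindex_bij_betw[OF \<pi>_init[of i], of g] by simp
    also have "(\<Sum>k\<in>I i. g (\<pi> k)) = (\<Sum>k\<in>I i. g (\<sigma> i k))"
      by (intro sum.cong refl arg_cong[where f = g] \<pi>_block) (use Iblk[of i] in \<open>auto simp: subset_iff\<close>)
    also have "\<dots> = (\<Sum>k\<in>A i. g k)"
    proof -
      have "inj_on (\<sigma> i) (I i)" using sigs(1)[of i] Iblk[of i] by (meson bij_betw_def inj_on_subset)
      then have "bij_betw (\<sigma> i) (I i) (A i)" using sigs(2)[of i] by (simp add: bij_betw_def)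
      then show ?thesis by (rule sum.reindex_bij_betw)
    qed
    finally show ?thesis by (simp add: S_def P_def' g_def)
  qed
  obtain M where M: "\<And>K. norm (T K) \<le> M"
  proof -
    have "Bseq T" using Tconv by (intro convergent_imp_Bseq convergentI)
    then show ?thesis using that unfolding Bseq_def by (meson less_imp_le)
  qed
  obtain i :: nat where i: "M < real i" using reals_Archimedean2 by blast
  have "real i < norm (P (A i) x) - norm (S (b i) x)" using Abig[of i] by linarith
  also have "\<dots> \<le> norm (T (b i + card (A i)))"
    unfolding Tval using norm_triangle_ineq2[of "P (A i) x" "- S (b i) x"] by (simp add: add.commute)
  also have "\<dots> \<le> M" by (rule M)
  finally show False using i by simp
qed

end

lemma geom_tail: "m \<le> n \<Longrightarrow> (\<Sum>i\<in>{m..<n}. 1 / 2 ^ i :: real) \<le> 2 / 2 ^ m - 2 / 2 ^ n"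
proof (induction n rule: dec_induct)
  case base
  then show ?case by simp
next
  case (step n)
  have "(\<Sum>i\<in>{m..<Suc n}. 1 / 2 ^ i :: real) = (\<Sum>i\<in>{m..<n}. 1 / 2 ^ i) + 1 / 2 ^ n"
    using step(1) by simp
  also have "\<dots> \<le> 2 / 2 ^ m - 2 / 2 ^ n + 1 / 2 ^ n" using step(3) by simp
  also have "\<dots> = 2 / 2 ^ m - 2 / 2 ^ Suc n" by (simp add: field_simps)
  finally show ?case .
qed

lemma geom_bound:
  fixes f :: "nat \<Rightarrow> 'b::real_normed_vector"
  assumes "\<And>i. norm (f i) \<le> B / 2 ^ i" "m \<le> n"
  shows "norm (\<Sum>i\<in>{m..<n}. f i) \<le> 2 * B / 2 ^ m"
proof -
  have "norm (f 0) \<le> B" using assms(1)[of 0] by simp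
  then have B: "0 \<le> B" using norm_ge_zero[of "f 0"] by linarith
  have "norm (\<Sum>i\<in>{m..<n}. f i) \<le> (\<Sum>i\<in>{m..<n}. B / 2 ^ i)"
    by (rule order_trans[OF norm_sum sum_mono]) (rule assms(1))
  also have "\<dots> = B * (\<Sum>i\<in>{m..<n}. 1 / 2 ^ i)" by (simp add: sum_distrib_left)
  also have "\<dots> \<le> B * (2 / 2 ^ m)"
    using geom_tail[OF assms(2)] B by (intro mult_left_mono) (auto intro: order_trans)
  also have "\<dots> = 2 * B / 2 ^ m" by simp
  finally show ?thesis .
qed

lemma cauchy_geom:
  fixes f :: "nat \<Rightarrow> 'b::real_normed_vector"
  assumes "\<And>i. norm (f i) \<le> B / 2 ^ i"
  shows "Cauchy (\<lambda>J. \<Sum>i<J. f i)"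
proof (rule metric_CauchyI)
  fix \<epsilon> :: real assume eps: "0 < \<epsilon>"
  have "norm (f 0) \<le> B" using assms(1)[of 0] by simp
  then have B: "0 \<le> B" using norm_ge_zero[of "f 0"] by linarith
  obtain M where M: "(1/2::real) ^ M < \<epsilon> / (2 * B + 1)"
    using real_arch_pow_inv[of "\<epsilon> / (2 * B + 1)" "1/2"] eps B by auto
  have bM: "2 * B / 2 ^ M < \<epsilon>"
  proof -
    have "2 * B / 2 ^ M \<le> (2 * B + 1) * (1/2) ^ M" by (simp add: power_one_over field_simps)
    also have "\<dots> < (2 * B + 1) * (\<epsilon> / (2 * B + 1))" using M B by (intro mult_strict_left_mono) auto
    also have "\<dots> = \<epsilon>" using B by simp
    finally show ?thesis .
  qed
  have dist_le: "dist (\<Sum>i<p. f i) (\<Sum>i<q. f i) \<le> 2 * B / 2 ^ M" if "M \<le> p" "p \<le> q" for p q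
  proof -
    have "(\<Sum>i<q. f i) = (\<Sum>i<p. f i) + (\<Sum>i\<in>{p..<q}. f i)"
      using sum.atLeastLessThan_concat[of 0 p q f] that by (simp add: lessThan_atLeast0)
    then have "dist (\<Sum>i<p. f i) (\<Sum>i<q. f i) = norm (\<Sum>i\<in>{p..<q}. f i)"
      by (simp add: dist_norm norm_minus_commute)
    also have "\<dots> \<le> 2 * B / 2 ^ p" by (rule geom_bound[OF assms that(2)])
    also have "\<dots> \<le> 2 * B / 2 ^ M" using that B by (intro divide_left_mono) auto
    finally show ?thesis .
  qed
  show "\<exists>M. \<forall>m\<ge>M. \<forall>n\<ge>M. dist (\<Sum>i<m. f i) (\<Sum>i<n. f i) < \<epsilon>"
  proof (intro exI allI impI)
    fix p q assume "M \<le> p" "M \<le> q"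
    then have "dist (\<Sum>i<p. f i) (\<Sum>i<q. f i) \<le> 2 * B / 2 ^ M"
      using dist_le dist_le[of q p] by (cases "p \<le> q") (auto simp: dist_commute)
    then show "dist (\<Sum>i<p. f i) (\<Sum>i<q. f i) < \<epsilon>" using bM by linarith
  qed
qed

context bctx
begin

lemma unc_uniform:
  assumes unc: "unconditional_basis sc e"
  shows "\<exists>C>0. \<forall>x A. finite A \<longrightarrow> norm (P A x) \<le> C * norm x"
proof -
  obtain a0 b0 :: real where a0: "0 < a0" "\<And>n. a0 \<le> norm (e n)" using sn_bounds by metis
  define E where "E k = {x. \<forall>A. finite A \<longrightarrow> norm (P A x) \<le> real k}" for k :: nat
  have cover: "(\<Union>k. closure (E k)) = UNIV"
  proof -
    have "x \<in> E (nat \<lceil>M\<rceil>)" if "\<forall>A. finite A \<longrightarrow> norm (P A x) \<le> M" for x M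
      using that by (auto simp: E_def intro: order_trans[OF _ real_nat_ceiling_ge])
    then have "\<forall>x. \<exists>k. x \<in> E k" using unc_pointwise[OF unc] by blast
    then show ?thesis using closure_subset by blast
  qed
  have "\<exists>k. interior (closure (E k)) \<noteq> {}"
  proof (rule ccontr)
    assume "\<not> ?thesis"
    then have "\<And>T. T \<in> range (\<lambda>k. closure (E k)) \<Longrightarrow> closedin euclidean T \<and> euclidean interior_of T = {}"
      by (auto simp: closed_closedin[symmetric])
    then have "euclidean interior_of \<Union> (range (\<lambda>k. closure (E k))) = {}"
      by (intro Baire_category_alt) (auto simp: completely_metrizable_space_euclidean)
    then show False using cover by simp
  qed
  then obtain k x0 where "x0 \<in> interior (closure (E k))" by blast
  then obtain r where r: "0 < r" "ball x0 r \<subseteq> closure (E k)"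
    by (meson interior_subset open_contains_ball open_interior order_trans)
  have appr: "\<exists>u. (\<forall>A. finite A \<longrightarrow> norm (P A u) \<le> 2 * real k) \<and> norm (u - y) < \<epsilon>"
    if y: "norm y < r" and eps: "0 < \<epsilon>" for y \<epsilon>
  proof -
    have "x0 + y \<in> closure (E k)" using r y by (auto simp: dist_norm)
    then obtain u1 where u1: "u1 \<in> E k" "dist u1 (x0 + y) < \<epsilon> / 2"
      using eps closure_approachable by (metis half_gt_zero)
    have "x0 \<in> closure (E k)" using r by auto
    then obtain u2 where u2: "u2 \<in> E k" "dist u2 x0 < \<epsilon> / 2"
      using eps closure_approachable by (metis half_gt_zero)
    have "\<forall>A. finite A \<longrightarrow> norm (P A (u1 - u2)) \<le> 2 * real k"
    proof (intro allI impI)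
      fix A :: "nat set" assume "finite A"
      then have "norm (P A u1) \<le> real k" "norm (P A u2) \<le> real k" using u1 u2 by (auto simp: E_def)
      then show "norm (P A (u1 - u2)) \<le> 2 * real k"
        unfolding P_diff using norm_triangle_ineq4[of "P A u1" "P A u2"] by linarith
    qed
    moreover have "norm ((u1 - u2) - y) < \<epsilon>"
    proof -
      have "(u1 - u2) - y = (u1 - (x0 + y)) - (u2 - x0)" by (simp add: algebra_simps)
      then have "norm ((u1 - u2) - y) \<le> norm (u1 - (x0 + y)) + norm (u2 - x0)"
        by (metis norm_triangle_ineq4)
      then show ?thesis using u1 u2 by (simp add: dist_norm)
    qed
    ultimately show ?thesis by blast
  qed
  define C0 where "C0 = 4 * real k / r"
  have C0: "0 \<le> C0" using r by (simp add: C0_def)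
  have appr2: "\<exists>u. (\<forall>A. finite A \<longrightarrow> norm (P A u) \<le> C0 * norm y) \<and> norm (y - u) < \<epsilon>"
    if eps: "0 < \<epsilon>" for y \<epsilon>
  proof (cases "y = 0")
    case True
    then show ?thesis using eps by (intro exI[of _ 0]) auto
  next
    case False
    define t where "t = 2 * norm y / r"
    have t: "0 < t" using False r by (simp add: t_def)
    define y' where "y' = scaleR (1 / t) y"
    have ny': "norm y' < r" using t r False by (simp add: y'_def t_def)
    obtain u' where u': "\<forall>A. finite A \<longrightarrow> norm (P A u') \<le> 2 * real k" "norm (u' - y') < \<epsilon> / t"
      using appr[OF ny', of "\<epsilon> / t"] eps t by auto
    define u where "u = scaleR t u'"
    have "\<forall>A. finite A \<longrightarrow> norm (P A u) \<le> C0 * norm y"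
    proof (intro allI impI)
      fix A :: "nat set" assume "finite A"
      have "norm (P A u) = t * norm (P A u')" using t by (simp add: u_def P_scaleR)
      also have "\<dots> \<le> t * (2 * real k)" using u' \<open>finite A\<close> t by (intro mult_left_mono) auto
      also have "\<dots> = C0 * norm y" using r by (simp add: t_def C0_def field_simps)
      finally show "norm (P A u) \<le> C0 * norm y" .
    qed
    moreover have "norm (y - u) < \<epsilon>"
    proof -
      have "y - u = scaleR t (y' - u')" using t by (simp add: y'_def u_def algebra_simps)
      then have "norm (y - u) = t * norm (u' - y')" using t by (simp add: norm_minus_commute)
      also have "\<dots> < t * (\<epsilon> / t)" using u' t by (intro mult_strict_left_mono) auto
      also have "\<dots> = \<epsilon>" using t by simp
      finally show ?thesis .
    qed
    ultimately show ?thesis by blast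
  qed
  have main: "norm (P A y) \<le> 2 * C0 * norm y" if A: "finite A" for A y
  proof (cases "y = 0")
    case True then show ?thesis by simp
  next
    case False
    then have ny: "0 < norm y" by simp
    define gu where "gu i z = (SOME u. (\<forall>A. finite A \<longrightarrow> norm (P A u) \<le> C0 * norm z) \<and> norm (z - u) < norm y / 2 ^ Suc i)" for i z
    have gu: "(\<forall>A. finite A \<longrightarrow> norm (P A (gu i z)) \<le> C0 * norm z) \<and> norm (z - gu i z) < norm y / 2 ^ Suc i" for i z
    proof -
      have "0 < norm y / 2 ^ Suc i" using ny by simp
      from appr2[OF this, of z] show ?thesis unfolding gu_def by (rule someI_ex)
    qed
    define rr where "rr = rec_nat y (\<lambda>i z. z - gu i z)"
    have rr0: "rr 0 = y" by (simp add: rr_def)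
    have rrS: "rr (Suc i) = rr i - gu i (rr i)" for i by (simp add: rr_def)
    define uu where "uu i = gu i (rr i)" for i
    have rr_le: "norm (rr i) \<le> norm y / 2 ^ i" for i
    proof (cases i)
      case 0 then show ?thesis by (simp add: rr0)
    next
      case (Suc j)
      then show ?thesis using gu[of j "rr j"] by (simp add: rrS)
    qed
    have Pu: "norm (P B (uu i)) \<le> (C0 * norm y) / 2 ^ i" if "finite B" for B i
    proof -
      have "norm (P B (uu i)) \<le> C0 * norm (rr i)" using gu[of i "rr i"] that by (simp add: uu_def)
      also have "\<dots> \<le> C0 * (norm y / 2 ^ i)" using rr_le C0 by (intro mult_left_mono) auto
      finally show ?thesis by simp
    qed
    define Y where "Y J = (\<Sum>i<J. uu i)" for J
    have Y: "Y J = y - rr J" for J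
      by (induction J) (simp_all add: Y_def rr0 rrS uu_def[symmetric] algebra_simps)
    have Ydiff: "Y J' - Y J = (\<Sum>i\<in>{J..<J'}. uu i)" if "J \<le> J'" for J J'
      using sum.atLeastLessThan_concat[of 0 J J' uu] that by (simp add: Y_def lessThan_atLeast0) (metis add_diff_cancel_left')
    have cj: "norm (coord sc e j (uu i)) \<le> (C0 * norm y / a0) / 2 ^ i" for j i
    proof -
      have "norm (coord sc e j (uu i)) \<le> norm (P {j} (uu i)) / a0" by (rule coord_norm_le[OF a0])
      also have "\<dots> \<le> ((C0 * norm y) / 2 ^ i) / a0" using Pu[of "{j}" i] a0 by (intro divide_right_mono) auto
      also have "\<dots> = (C0 * norm y / a0) / 2 ^ i" by (simp add: field_simps)
      finally show ?thesis .
    qed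
    have "convergent (\<lambda>J. coord sc e j (Y J))" for j
    proof -
      have "Cauchy (\<lambda>J. \<Sum>i<J. coord sc e j (uu i))" by (rule cauchy_geom[OF cj])
      then have "convergent (\<lambda>J. \<Sum>i<J. coord sc e j (uu i))" by (rule rnf_complete)
      then show ?thesis by (simp add: Y_def coord_sum)
    qed
    then obtain \<beta> where \<beta>: "\<And>j. (\<lambda>J. coord sc e j (Y J)) \<longlonglongrightarrow> \<beta> j"
      unfolding convergent_def by metis
    have PYlim: "(\<lambda>J. P B (Y J)) \<longlonglongrightarrow> (\<Sum>j\<in>B. sc (\<beta> j) (e j))" for B
      unfolding P_def' by (intro tendsto_sum scl_tendsto \<beta>)
    define z where "z n = (\<Sum>j<n. sc (\<beta> j) (e j))" for n
    have SY: "norm (z n - S n (Y J)) \<le> 2 * (C0 * norm y) / 2 ^ J" for n J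
    proof -
      have lim: "(\<lambda>J'. norm (S n (Y J') - S n (Y J))) \<longlonglongrightarrow> norm (z n - S n (Y J))"
        unfolding S_P z_def by (intro tendsto_intros PYlim)
      have "norm (S n (Y J') - S n (Y J)) \<le> 2 * (C0 * norm y) / 2 ^ J" if "J \<le> J'" for J'
      proof -
        have "S n (Y J') - S n (Y J) = (\<Sum>i\<in>{J..<J'}. P {..<n} (uu i))"
          unfolding S_P P_diff[symmetric] Ydiff[OF that] P_sum ..
        also have "norm \<dots> \<le> 2 * (C0 * norm y) / 2 ^ J"
          by (rule geom_bound[OF _ that]) (rule Pu, simp)
        finally show ?thesis .
      qed
      then show ?thesis by (intro LIMSEQ_le_const2[OF lim]) auto
    qed
    have zlim: "z \<longlonglongrightarrow> y"
    proof (rule LIMSEQ_I)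
      fix \<epsilon> :: real assume eps: "0 < \<epsilon>"
      define D where "D = (2 * (C0 * norm y) + norm y)"
      have D: "0 < D" using C0 ny by (simp add: D_def add_nonneg_pos)
      obtain J where J: "(1/2::real) ^ J < (\<epsilon> / 2) / D"
        using real_arch_pow_inv[of "(\<epsilon> / 2) / D" "1/2"] eps D by auto
      have DJ: "D / 2 ^ J < \<epsilon> / 2"
      proof -
        have "D / 2 ^ J = D * (1/2) ^ J" by (simp add: power_one_over)
        also have "\<dots> < D * ((\<epsilon> / 2) / D)" using J D by (intro mult_strict_left_mono) auto
        also have "\<dots> = \<epsilon> / 2" using D by simp
        finally show ?thesis .
      qed
      obtain N where N: "\<And>n. N \<le> n \<Longrightarrow> norm (S n (Y J) - Y J) < \<epsilon> / 2"
        using LIMSEQ_D[OF S_lim, of "\<epsilon> / 2" "Y J"] eps by auto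
      show "\<exists>no. \<forall>n\<ge>no. norm (z n - y) < \<epsilon>"
      proof (intro exI allI impI)
        fix n assume "N \<le> n"
        have eq3: "z n - y = (z n - S n (Y J)) + (S n (Y J) - Y J) + (Y J - y)" by simp
        have t1: "norm ((z n - S n (Y J)) + (S n (Y J) - Y J) + (Y J - y)) \<le> norm ((z n - S n (Y J)) + (S n (Y J) - Y J)) + norm (Y J - y)"
          by (rule norm_triangle_ineq)
        have t2: "norm ((z n - S n (Y J)) + (S n (Y J) - Y J)) \<le> norm (z n - S n (Y J)) + norm (S n (Y J) - Y J)"
          by (rule norm_triangle_ineq)
        have "norm (z n - y) \<le> norm (z n - S n (Y J)) + norm (S n (Y J) - Y J) + norm (Y J - y)"
          unfolding eq3 using t1 t2 by linarith
        moreover have "norm (Y J - y) \<le> norm y / 2 ^ J" using rr_le[of J] by (simp add: Y)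
        moreover have "norm (z n - S n (Y J)) \<le> 2 * (C0 * norm y) / 2 ^ J" by (rule SY)
        moreover have "2 * (C0 * norm y) / 2 ^ J + norm y / 2 ^ J = D / 2 ^ J"
          by (simp add: D_def add_divide_distrib)
        ultimately show "norm (z n - y) < \<epsilon>" using N[OF \<open>N \<le> n\<close>] DJ by linarith
      qed
    qed
    have cy: "coord sc e j y = \<beta> j" for j
      using zlim unfolding z_def by (rule coord_eq)
    have "(\<lambda>J. norm (P A (Y J))) \<longlonglongrightarrow> norm (P A y)"
      unfolding P_def'[of y] cy by (intro tendsto_norm PYlim)
    moreover have "norm (P A (Y J)) \<le> 2 * C0 * norm y" for J
    proof -
      have "P A (Y J) = (\<Sum>i\<in>{0..<J}. P A (uu i))" by (simp add: Y_def P_sum lessThan_atLeast0)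
      also have "norm \<dots> \<le> 2 * (C0 * norm y) / 2 ^ 0"
        by (rule geom_bound) (use Pu A in auto)
      finally show ?thesis by simp
    qed
    ultimately show ?thesis by (intro LIMSEQ_le_const2) auto
  qed
  show ?thesis
  proof (intro exI conjI allI impI)
    show "0 < 2 * C0 + 1" using C0 by simp
    fix x :: 'a and A :: "nat set" assume "finite A"
    then have "norm (P A x) \<le> 2 * C0 * norm x" by (rule main)
    also have "\<dots> \<le> (2 * C0 + 1) * norm x" by (simp add: distrib_right)
    finally show "norm (P A x) \<le> (2 * C0 + 1) * norm x" .
  qed
qed

end

context bctx
begin

lemma unc_renorm:
  assumes unc: "unconditional_basis sc e"
  shows "\<exists>N. equivalent_norm sc N \<and> one_quasi_greedy sc e N"
proof -
  obtain C where C: "0 < C" "\<And>x A. finite A \<Longrightarrow> norm (P A x) \<le> C * norm x"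
    using unc_uniform[OF unc] by blast
  define V where "V x = (\<lambda>A. norm (P A x)) ` {A. finite A}" for x
  define N where "N x = Sup (V x)" for x
  have Vne: "V x \<noteq> {}" for x by (auto simp: V_def)
  have Vbdd: "bdd_above (V x)" for x
    unfolding V_def using C(2) by (intro bdd_aboveI[of _ "C * norm x"]) auto
  have le: "norm (P A x) \<le> N x" if "finite A" for A x
    unfolding N_def using that by (intro cSup_upper Vbdd) (auto simp: V_def)
  have least: "N x \<le> K" if "\<And>A. finite A \<Longrightarrow> norm (P A x) \<le> K" for x K
    unfolding N_def using that Vne by (intro cSup_least) (auto simp: V_def)
  have upper: "N x \<le> C * norm x" for x by (rule least) (rule C(2))
  have lower: "norm x \<le> N x" for x
  proof -
    have "(\<lambda>n. norm (S n x)) \<longlonglongrightarrow> norm x" by (intro tendsto_norm S_lim)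
    moreover have "\<forall>n. norm (S n x) \<le> N x" unfolding S_P by (auto intro: le)
    ultimately show ?thesis by (intro LIMSEQ_le_const2) auto
  qed
  have tri: "N (x + y) \<le> N x + N y" for x y
  proof (rule least)
    fix A :: "nat set" assume "finite A"
    have "norm (P A (x + y)) \<le> norm (P A x) + norm (P A y)" unfolding P_add by (rule norm_triangle_ineq)
    also have "\<dots> \<le> N x + N y" using le \<open>finite A\<close> by (intro add_mono) auto
    finally show "norm (P A (x + y)) \<le> N x + N y" .
  qed
  have scle: "N (sc a x) \<le> norm a * N x" for a x
  proof (rule least)
    fix A :: "nat set" assume "finite A"
    have "norm (P A (sc a x)) = norm a * norm (P A x)" by (simp add: P_sc norm_sc)
    also have "\<dots> \<le> norm a * N x" using le \<open>finite A\<close> by (intro mult_left_mono) auto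
    finally show "norm (P A (sc a x)) \<le> norm a * N x" .
  qed
  have sceq: "N (sc a x) = norm a * N x" for a x
  proof (cases "a = 0")
    case True
    have "N 0 \<le> 0" by (rule least) simp
    moreover have "0 \<le> N 0" using lower[of 0] by simp
    ultimately show ?thesis using True by simp
  next
    case False
    have "N x = N (sc (inverse a) (sc a x))" using False by (simp add: sc_mult[symmetric] sc_one)
    also have "\<dots> \<le> norm (inverse a) * N (sc a x)" by (rule scle)
    finally have "norm a * N x \<le> norm a * (norm (inverse a) * N (sc a x))"
      by (intro mult_left_mono) auto
    also have "\<dots> = N (sc a x)" using False by (simp add: norm_inverse)
    finally show ?thesis using scle[of a x] by simp
  qed
  have zero: "N x = 0 \<longleftrightarrow> x = 0" for x
  proof
    assume "N x = 0" then show "x = 0" using lower[of x] by simp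
  next
    assume "x = 0" then show "N x = 0" using upper[of x] lower[of x] by simp
  qed
  have "is_norm_over sc N" unfolding is_norm_over_def using zero sceq tri by blast
  moreover have "\<exists>c C. 0 < c \<and> 0 < C \<and> (\<forall>x. c * norm x \<le> N x \<and> N x \<le> C * norm x)"
    using C(1) lower upper by (intro exI[of _ 1] exI[of _ C]) auto
  ultimately have "equivalent_norm sc N" unfolding equivalent_norm_def by blast
  moreover have "one_quasi_greedy sc e N"
    unfolding one_quasi_greedy_def
  proof (intro allI impI conjI)
    fix x m A assume "greedy_set sc e x m A"
    then have finA: "finite A" by (simp add: greedy_set_def)
    show "N (greedy_sum sc e x A) \<le> N x"
    proof (rule least)
      fix B :: "nat set" assume "finite B"
      then have "P B (P A x) = P (B \<inter> A) x" using finA by (simp add: P_P)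
      then show "norm (P B (greedy_sum sc e x A)) \<le> N x" using le \<open>finite B\<close> by simp
    qed
    show "N (x - greedy_sum sc e x A) \<le> N x"
    proof (rule least)
      fix B :: "nat set" assume finB: "finite B"
      have "P B x = P (B - A) x + P (B \<inter> A) x"
      proof -
        have "B = (B - A) \<union> (B \<inter> A)" by auto
        then have "P B x = P ((B - A) \<union> (B \<inter> A)) x" by simp
        also have "\<dots> = P (B - A) x + P (B \<inter> A) x" by (rule P_union) (use finB in auto)
        finally show ?thesis .
      qed
      then have "P B (x - P A x) = P (B - A) x" using finB finA by (simp add: P_diff P_P)
      then show "norm (P B (x - greedy_sum sc e x A)) \<le> N x" using le finB by simp
    qed
  qed
  ultimately show ?thesis by blast
qed

end

theorem corollary2p4:
  fixes sc :: "'k::real_normed_field \<Rightarrow> 'a::banach \<Rightarrow> 'a"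
    and e :: "nat \<Rightarrow> 'a"
  assumes "normed_scalar_action sc"
    and "\<not> finite_dimensional_over sc"
    and "schauder_basis sc e"
    and "semi_normalized e"
  shows "(\<exists>N. equivalent_norm sc N \<and> one_quasi_greedy sc e N) \<longleftrightarrow> unconditional_basis sc e"
proof -
  interpret bctx sc e by unfold_locales (use assms in auto)
  show ?thesis
  proof
    assume "\<exists>N. equivalent_norm sc N \<and> one_quasi_greedy sc e N"
    then obtain N where "equivalent_norm sc N" "one_quasi_greedy sc e N" by blast
    then show "unconditional_basis sc e" by (rule qg_unconditional)
  next
    assume "unconditional_basis sc e"
    then show "\<exists>N. equivalent_norm sc N \<and> one_quasi_greedy sc e N" by (rule unc_renorm)
  qed
qed

end
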